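(* Let $E\subset[0,1]$ with $[0,1]\setminus E$ finite. For each $n$ let $R_n$ be a random closed set with $R_n\subset\{0,\dots,n\}/n$ a.s., with i.i.d. copies $\{R_{n,j}\}_{j\in\mathbb N}$, and assume there is $c_0>0$ such that for every $G\in\mathcal G_0$ there is $C$ with $\max_{k/n\in G}\mathbb P(k/n\in R_n)\le Cn^{-c_0}$ for all $n$. Let $\{X_j\}$ be i.i.d., independent of all $R_{n,j}$, with $\mathbb P(|X_1|>x)=x^{-\alpha}L(x)$ where $\alpha\ge1$ and $L$ is slowly varying, and $\mathbb P(X_1>x)/\mathbb P(|X_1|>x)\to\mathsf p\in(0,1]$; let $m_n$ be increasing positive integers with $m_n\to\infty$, $m_n\le Cn^\kappa$ for some $\kappa\in(0,c_0/(1-1/\alpha))$ (any $\kappa>0$ if $\alpha=1$), and $a_n$ with $m_n\mathbb P(X_1>a_n)\to1$. Let $X_{1:m_n},\dots,X_{m_n:m_n}$ be the reordering of $X_1,\dots,X_{m_n}$ with $|X_{1:m_n}|\ge\dots\ge|X_{m_n:m_n}|$, $\sigma_n$ the permutation with $X_{\sigma_n(j)}=X_{j:m_n}$, $\hat R_{n,j}=R_{n,\sigma_n(j)}$, $\hat J_{n,k}=\{j\le m_n:k/n\in\hat R_{n,j}\}$. Let $\gamma\in(0,c_0/\alpha)$, $\delta_n=n^{-\gamma}$ and $$W_{n,\ell}(k)=\sum_{j\in\hat J_{n,k}\setminus[\ell]}X_{j:m_n}\mathbf 1\{|X_{j:m_n}|/a_n\le\delta_n\}$$ (empty sum $=0$).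 Then for all $\ell\in\mathbb N$, all $G\in\mathcal G_0$ and all $\epsilon>0$, $$\limsup_{n\to\infty}\mathbb P\Big(\frac1{a_n}\max_{k/n\in G}|W_{n,\ell}(k)|>\epsilon\Big)=0.$$
   Context: $[\ell]=\{1,\dots,\ell\}$; $\mathcal G_0=\{(a,b):[a,b]\subset E\}$; the maximum is over $k\in\{0,\dots,n\}$ with $k/n\in G$. *)

theory Defs
  imports "HOL-Probability.Probability"
begin

definition slowly_varying :: "(real \<Rightarrow> real) \<Rightarrow> bool" where
  "slowly_varying L \<longleftrightarrow> L \<in> borel_measurable borel \<and> (\<forall>\<^sub>F x in at_top. L x > 0) \<and>
     (\<forall>t>0. ((\<lambda>x. L (t * x) / L x) \<longlongrightarrow> 1) at_top)"

definition grid_trace :: "nat \<Rightarrow> real set \<Rightarrow> nat set" where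
  "grid_trace n S = {k. k \<le> n \<and> real k / real n \<in> S}"

definition hatJ :: "(nat \<Rightarrow> nat \<Rightarrow> 'a \<Rightarrow> real set) \<Rightarrow> (nat \<Rightarrow> 'a \<Rightarrow> nat \<Rightarrow> nat) \<Rightarrow> (nat \<Rightarrow> nat)
    \<Rightarrow> nat \<Rightarrow> nat \<Rightarrow> 'a \<Rightarrow> nat set" where
  "hatJ R \<sigma> m n k \<omega> = {j \<in> {1..m n}. real k / real n \<in> R n (\<sigma> n \<omega> j) \<omega>}"

definition Wsum :: "(nat \<Rightarrow> 'a \<Rightarrow> real) \<Rightarrow> (nat \<Rightarrow> nat \<Rightarrow> 'a \<Rightarrow> real set) \<Rightarrow> (nat \<Rightarrow> 'a \<Rightarrow> nat \<Rightarrow> nat)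
    \<Rightarrow> (nat \<Rightarrow> nat) \<Rightarrow> (nat \<Rightarrow> real) \<Rightarrow> real \<Rightarrow> nat \<Rightarrow> nat \<Rightarrow> nat \<Rightarrow> 'a \<Rightarrow> real" where
  "Wsum X R \<sigma> m a \<gamma> n l k \<omega> =
     (\<Sum>j \<in> hatJ R \<sigma> m n k \<omega> - {1..l}.
        X (\<sigma> n \<omega> j) \<omega> * (if \<bar>X (\<sigma> n \<omega> j) \<omega>\<bar> / a n \<le> real n powr (- \<gamma>) then 1 else 0))"

end

theory Submission
  imports Defs
begin



lemma (in prob_space) expand_prod_integral:
  fixes f :: "nat \<Rightarrow> 'a \<Rightarrow> real"
  assumes fin: "finite I"
    and int: "\<And>A. A \<subseteq> I \<Longrightarrow> integrable M (\<lambda>\<omega>. \<Prod>i\<in>A. f i \<omega>)"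
    and eq: "\<And>A. A \<subseteq> I \<Longrightarrow> (\<integral>\<omega>. (\<Prod>i\<in>A. f i \<omega>) \<partial>M) = (\<Prod>i\<in>A. c i)"
  shows "(\<integral>\<omega>. (\<Prod>i\<in>I. 1 + f i \<omega>) \<partial>M) = (\<Prod>i\<in>I. 1 + c i)"
proof -
  have "(\<integral>\<omega>. (\<Prod>i\<in>I. 1 + f i \<omega>) \<partial>M) = (\<integral>\<omega>. (\<Sum>A\<in>Pow I. \<Prod>i\<in>A. f i \<omega>) \<partial>M)"
    using prod_add[OF fin, of "\<lambda>i. f i _" "\<lambda>_. 1"] by (simp add: add.commute)
  also have "\<dots> = (\<Sum>A\<in>Pow I. \<integral>\<omega>. (\<Prod>i\<in>A. f i \<omega>) \<partial>M)"
    by (rule Bochner_Integration.integral_sum[where I="Pow I" and f="\<lambda>A \<omega>. \<Prod>i\<in>A. f i \<omega>"]) (use int in auto)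
  also have "\<dots> = (\<Sum>A\<in>Pow I. \<Prod>i\<in>A. c i)"
    using eq by (intro sum.cong) auto
  also have "\<dots> = (\<Prod>i\<in>I. 1 + c i)"
    using prod_add[OF fin, of c "\<lambda>_. 1"] by (simp add: add.commute)
  finally show ?thesis .
qed




lemma potter_aux:
  fixes T :: "real \<Rightarrow> real" and \<alpha> \<eta> :: real
  assumes anti: "\<And>x y. 0 < x \<Longrightarrow> x \<le> y \<Longrightarrow> T y \<le> T x"
    and pos: "eventually (\<lambda>x. T x > 0) at_top"
    and ratio: "((\<lambda>x. T (2*x) / T x) \<longlongrightarrow> 2 powr (-\<alpha>)) at_top"
    and \<eta>: "0 < \<eta>" "\<eta> < \<alpha>"
  shows "\<exists>x0 Bu bl. x0 \<ge> 1 \<and> bl > 0 \<and>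
     (\<forall>x\<ge>x0. bl * (x/x0) powr (-\<alpha>-\<eta>) \<le> T x \<and> T x \<le> Bu * (x/x0) powr (-\<alpha>+\<eta>))"
proof -
  have lt1: "2 powr (-\<alpha>-\<eta>) < 2 powr (-\<alpha>)" and lt2: "2 powr (-\<alpha>) < 2 powr (-\<alpha>+\<eta>)"
    using \<eta> by auto
  have ev: "eventually (\<lambda>x. T x > 0 \<and> 2 powr (-\<alpha>-\<eta>) < T (2*x) / T x \<and> T (2*x) / T x < 2 powr (-\<alpha>+\<eta>)) at_top"
    using pos order_tendstoD(1)[OF ratio lt1] order_tendstoD(2)[OF ratio lt2] by eventually_elim auto
  then obtain x1 where x1: "\<And>x. x \<ge> x1 \<Longrightarrow> T x > 0 \<and> 2 powr (-\<alpha>-\<eta>) < T (2*x) / T x \<and> T (2*x) / T x < 2 powr (-\<alpha>+\<eta>)"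
    by (auto simp: eventually_at_top_linorder)
  define x0 where "x0 = max x1 1"
  have x0: "x0 \<ge> 1" "x0 \<ge> x1" by (auto simp: x0_def)
  define Bu where "Bu = T x0 * 2 powr \<alpha>"
  define bl where "bl = T (2*x0)"
  have bl: "bl > 0" using x1[of "2*x0"] x0 by (auto simp: bl_def)
  have up: "T (2*x) \<le> 2 powr (-\<alpha>+\<eta>) * T x" and lo: "2 powr (-\<alpha>-\<eta>) * T x \<le> T (2*x)" if "x \<ge> x1" for x
  proof -
    have "T x > 0" using x1[OF that] by auto
    then show "T (2*x) \<le> 2 powr (-\<alpha>+\<eta>) * T x" "2 powr (-\<alpha>-\<eta>) * T x \<le> T (2*x)"
      using x1[OF that] by (auto simp: field_simps)
  qed
  have claim: "\<forall>x. x0 \<le> x \<and> x \<le> 2^(j+1) * x0 \<longrightarrow>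
      bl * (x/x0) powr (-\<alpha>-\<eta>) \<le> T x \<and> T x \<le> Bu * (x/x0) powr (-\<alpha>+\<eta>)" for j :: nat
  proof (induction j)
    case 0
    show ?case
    proof (intro allI impI conjI)
      fix x assume x: "x0 \<le> x \<and> x \<le> 2^(0+1) * x0"
      have y1: "1 \<le> x/x0" and y2: "x/x0 \<le> 2" using x x0 by (auto simp: field_simps)
      have "(x/x0) powr (-\<alpha>-\<eta>) \<le> 1" using y1 \<eta> x x0 powr_mono[of "-\<alpha>-\<eta>" 0 "x/x0"] by (auto split: if_splits)
      moreover have "T (2*x0) \<le> T x" using x x0 by (intro anti) auto
      ultimately show "bl * (x/x0) powr (-\<alpha>-\<eta>) \<le> T x" using bl unfolding bl_def
        by (metis mult.commute mult_left_le order_trans less_imp_le)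
      have "2 powr (-\<alpha>) \<le> 2 powr (-\<alpha>+\<eta>)" using lt2 by simp
      also have "\<dots> \<le> (x/x0) powr (-\<alpha>+\<eta>)" using y1 y2 \<eta> by (intro powr_mono2') auto
      finally have A: "2 powr (-\<alpha>) \<le> (x/x0) powr (-\<alpha>+\<eta>)" .
      have "T x \<le> T x0" using x x0 by (intro anti) auto
      also have "T x0 = Bu * 2 powr (-\<alpha>)" by (simp add: Bu_def powr_minus field_simps)
      also have "\<dots> \<le> Bu * (x/x0) powr (-\<alpha>+\<eta>)"
        using A x1[of x0] x0 by (intro mult_left_mono) (auto simp: Bu_def)
      finally show "T x \<le> Bu * (x/x0) powr (-\<alpha>+\<eta>)" .
    qed
  next
    case (Suc j)
    show ?case
    proof (intro allI impI)
      fix x assume x: "x0 \<le> x \<and> x \<le> 2^(Suc j+1) * x0"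
      show "bl * (x/x0) powr (-\<alpha>-\<eta>) \<le> T x \<and> T x \<le> Bu * (x/x0) powr (-\<alpha>+\<eta>)"
      proof (cases "x \<le> 2^(j+1) * x0")
        case True then show ?thesis using Suc x by auto
      next
        case False
        have "2 * x0 \<le> 2^(j+1) * x0" using x0 by (intro mult_right_mono) auto
        then have h: "x0 \<le> x/2 \<and> x/2 \<le> 2^(j+1) * x0" using False x by auto
        have IH: "bl * ((x/2)/x0) powr (-\<alpha>-\<eta>) \<le> T (x/2)" "T (x/2) \<le> Bu * ((x/2)/x0) powr (-\<alpha>+\<eta>)"
          using Suc.IH[rule_format, of "x/2"] h by auto
        have e1: "((x/2)/x0) powr (-\<alpha>-\<eta>) = (x/x0) powr (-\<alpha>-\<eta>) / 2 powr (-\<alpha>-\<eta>)"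
          and e2: "((x/2)/x0) powr (-\<alpha>+\<eta>) = (x/x0) powr (-\<alpha>+\<eta>) / 2 powr (-\<alpha>+\<eta>)"
          using x x0 by (simp_all add: powr_divide[symmetric] field_simps)
        have u: "T x \<le> 2 powr (-\<alpha>+\<eta>) * T (x/2)" and l: "2 powr (-\<alpha>-\<eta>) * T (x/2) \<le> T x"
          using up[of "x/2"] lo[of "x/2"] h x0 by auto
        have "bl * (x/x0) powr (-\<alpha>-\<eta>) = 2 powr (-\<alpha>-\<eta>) * (bl * ((x/2)/x0) powr (-\<alpha>-\<eta>))"
          by (subst e1) simp
        also have "\<dots> \<le> 2 powr (-\<alpha>-\<eta>) * T (x/2)" using IH by (intro mult_left_mono) auto
        also have "\<dots> \<le> T x" by (rule l)
        finally have L: "bl * (x/x0) powr (-\<alpha>-\<eta>) \<le> T x" .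
        have "T x \<le> 2 powr (-\<alpha>+\<eta>) * T (x/2)" by (rule u)
        also have "\<dots> \<le> 2 powr (-\<alpha>+\<eta>) * (Bu * ((x/2)/x0) powr (-\<alpha>+\<eta>))" using IH by (intro mult_left_mono) auto
        also have "\<dots> = Bu * (x/x0) powr (-\<alpha>+\<eta>)" by (subst e2) simp
        finally show ?thesis using L by auto
      qed
    qed
  qed
  have "\<forall>x\<ge>x0. bl * (x/x0) powr (-\<alpha>-\<eta>) \<le> T x \<and> T x \<le> Bu * (x/x0) powr (-\<alpha>+\<eta>)"
  proof (intro allI impI)
    fix x assume x: "x \<ge> x0"
    obtain j where j: "x/x0 < 2^j" using real_arch_pow[of 2 "x/x0"] by auto
    have "x < x0 * 2^j" using j x0 by (simp add: field_simps)
    moreover have "x0 * 2^j \<le> x0 * 2^(j+1)" using x0 by (intro mult_left_mono) auto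
    ultimately have "x \<le> 2^(j+1) * x0" by (simp add: mult.commute)
    then show "bl * (x/x0) powr (-\<alpha>-\<eta>) \<le> T x \<and> T x \<le> Bu * (x/x0) powr (-\<alpha>+\<eta>)"
      using claim[of j] x by auto
  qed
  then show ?thesis using x0 bl by blast
qed




lemma min_dyadic:
  fixes x :: real
  shows "min x (2^J) \<le> 1 + (\<Sum>j<J. 2^j * (if x > 2^j then 1 else 0))"
proof (induction J)
  case 0 then show ?case by simp
next
  case (Suc J)
  have "min x (2^Suc J) \<le> min x (2^J) + 2^J * (if x > 2^J then 1 else 0)"
    by (auto simp: min_def)
  then show ?case using Suc by simp
qed

lemma (in prob_space) trunc_mean:
  assumes Z[measurable]: "Z \<in> borel_measurable M"
  shows "(\<integral>\<omega>. min \<bar>Z \<omega>\<bar> (2^J) \<partial>M) \<le> 1 + (\<Sum>j<J. 2^j * measure M {\<omega>\<in>space M. \<bar>Z \<omega>\<bar> > 2^j})"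
proof -
  have meas: "{\<omega>\<in>space M. \<bar>Z \<omega>\<bar> > 2^j} \<in> sets M" for j :: nat by measurable
  have "(\<integral>\<omega>. min \<bar>Z \<omega>\<bar> (2^J) \<partial>M) \<le> (\<integral>\<omega>. 1 + (\<Sum>j<J. (2::real)^j * indicator {\<omega>\<in>space M. \<bar>Z \<omega>\<bar> > 2^j} \<omega>) \<partial>M)"
  proof (rule integral_mono)
    show "integrable M (\<lambda>\<omega>. min \<bar>Z \<omega>\<bar> (2^J))"
      by (rule integrable_const_bound[where B="2^J"]) auto
    show "integrable M (\<lambda>\<omega>. 1 + (\<Sum>j<J. (2::real)^j * indicator {\<omega>\<in>space M. \<bar>Z \<omega>\<bar> > 2^j} \<omega>))"
      using meas by (intro Bochner_Integration.integrable_add integrable_const Bochner_Integration.integrable_sum integrable_mult_right integrable_real_indicator) (auto simp: mult.commute less_top[symmetric])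
    fix \<omega> assume "\<omega> \<in> space M"
    then have "(\<Sum>j<J. (2::real)^j * indicator {\<omega>\<in>space M. \<bar>Z \<omega>\<bar> > 2^j} \<omega>) = (\<Sum>j<J. 2^j * (if \<bar>Z \<omega>\<bar> > 2^j then 1 else 0))"
      by (intro sum.cong) (auto simp: indicator_def)
    then show "min \<bar>Z \<omega>\<bar> (2^J) \<le> 1 + (\<Sum>j<J. (2::real)^j * indicator {\<omega>\<in>space M. \<bar>Z \<omega>\<bar> > 2^j} \<omega>)"
      using min_dyadic[of "\<bar>Z \<omega>\<bar>" J] by simp
  qed
  also have "\<dots> = 1 + (\<Sum>j<J. 2^j * measure M {\<omega>\<in>space M. \<bar>Z \<omega>\<bar> > 2^j})"
  proof -
    have ii: "integrable M (\<lambda>\<omega>. (2::real)^j * indicator {\<omega>\<in>space M. \<bar>Z \<omega>\<bar> > 2^j} \<omega>)" for j :: nat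
      using meas by (intro integrable_mult_right integrable_real_indicator) (auto simp: less_top[symmetric])
    have "(\<integral>\<omega>. 1 + (\<Sum>j<J. (2::real)^j * indicator {\<omega>\<in>space M. \<bar>Z \<omega>\<bar> > 2^j} \<omega>) \<partial>M)
       = 1 + (\<integral>\<omega>. (\<Sum>j<J. (2::real)^j * indicator {\<omega>\<in>space M. \<bar>Z \<omega>\<bar> > 2^j} \<omega>) \<partial>M)"
      by (subst Bochner_Integration.integral_add[OF integrable_const Bochner_Integration.integrable_sum[OF ii]]) (simp_all add: prob_space)
    also have "(\<integral>\<omega>. (\<Sum>j<J. (2::real)^j * indicator {\<omega>\<in>space M. \<bar>Z \<omega>\<bar> > 2^j} \<omega>) \<partial>M)
       = (\<Sum>j<J. (\<integral>\<omega>. (2::real)^j * indicator {\<omega>\<in>space M. \<bar>Z \<omega>\<bar> > 2^j} \<omega> \<partial>M))"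
      using ii by (intro Bochner_Integration.integral_sum) auto
    also have "\<dots> = (\<Sum>j<J. 2^j * measure M {\<omega>\<in>space M. \<bar>Z \<omega>\<bar> > 2^j})"
      using meas by (intro sum.cong refl) (simp add: less_top[symmetric])
    finally show ?thesis .
  qed
  finally show ?thesis .
qed




lemma choose_eta:
  fixes \<alpha> \<kappa> c0 :: real
  assumes "\<alpha> \<ge> 1" "\<kappa> > 0" "c0 > 0" "\<alpha> > 1 \<Longrightarrow> \<kappa> < c0 / (1 - 1/\<alpha>)"
  shows "\<exists>\<eta>. 0 < \<eta> \<and> \<eta> < 1 \<and> \<kappa> * (1 - (1-\<eta>)/(\<alpha>+\<eta>)) < c0"
proof -
  have lim: "((\<lambda>\<eta>. \<kappa> * (1 - (1-\<eta>)/(\<alpha>+\<eta>))) \<longlongrightarrow> \<kappa> * (1 - (1-0)/(\<alpha>+0))) (at_right 0)"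
    using assms(1) by (intro tendsto_intros) auto
  have "\<kappa> * (1 - 1/\<alpha>) < c0"
  proof (cases "\<alpha> > 1")
    case True
    then have "1 - 1/\<alpha> > 0" by (simp add: field_simps)
    then show ?thesis using assms(4)[OF True] by (simp add: field_simps)
  next
    case False then have "\<alpha> = 1" using assms(1) by auto
    then show ?thesis using assms by simp
  qed
  then have "eventually (\<lambda>\<eta>. \<kappa> * (1 - (1-\<eta>)/(\<alpha>+\<eta>)) < c0) (at_right 0)"
    using order_tendstoD(2)[OF lim] by simp
  moreover have "eventually (\<lambda>\<eta>. \<eta> < (1::real)) (at_right 0)"
    by (rule eventually_at_rightI[where b=1]) auto
  moreover have "eventually (\<lambda>\<eta>. \<eta> > (0::real)) (at_right 0)"
    by (rule eventually_at_rightI[where b=1]) auto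
  ultimately have "eventually (\<lambda>\<eta>. 0 < \<eta> \<and> \<eta> < 1 \<and> \<kappa> * (1 - (1-\<eta>)/(\<alpha>+\<eta>)) < c0) (at_right (0::real))"
    by eventually_elim auto
  then show ?thesis using eventually_happens[of _ "at_right (0::real)"] by (auto simp: trivial_limit_at_right_real)
qed




lemma two_pow_ceil_log:
  fixes a :: real assumes "a \<ge> 1"
  shows "(2::real) ^ nat \<lceil>log 2 a\<rceil> \<le> 2 * a" "a \<le> (2::real) ^ nat \<lceil>log 2 a\<rceil>"
proof -
  have l0: "log 2 a \<ge> 0" using assms by simp
  have e: "(2::real) ^ nat \<lceil>log 2 a\<rceil> = 2 powr (real (nat \<lceil>log 2 a\<rceil>))"
    by (simp add: powr_realpow)
  have c: "real (nat \<lceil>log 2 a\<rceil>) = of_int \<lceil>log 2 a\<rceil>" using l0 by simp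
  have "2 powr (of_int \<lceil>log 2 a\<rceil>) \<le> 2 powr (log 2 a + 1)"
    by (intro powr_mono) linarith+
  also have "\<dots> = 2 * a" using assms by (simp add: powr_add)
  finally show "(2::real) ^ nat \<lceil>log 2 a\<rceil> \<le> 2 * a" using e c by simp
  have "a = 2 powr (log 2 a)" using assms by simp
  also have "\<dots> \<le> 2 powr (of_int \<lceil>log 2 a\<rceil>)" by (intro powr_mono) auto
  finally show "a \<le> (2::real) ^ nat \<lceil>log 2 a\<rceil>" using e c by simp
qed

lemma dyadic_sum_bound:
  fixes T :: "real \<Rightarrow> real"
  assumes T01: "\<And>x. 0 \<le> T x \<and> T x \<le> 1" and x0: "x0 \<ge> 1" and \<eta>: "0 < \<eta>" "\<eta> < 1" and \<alpha>: "\<alpha> \<ge> 1"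
    and pot: "\<forall>x\<ge>x0. T x \<le> Bu * (x/x0) powr (-\<alpha>+\<eta>)"
  shows "\<exists>K. \<forall>a\<ge>1. 1 + (\<Sum>j<nat \<lceil>log 2 a\<rceil>. 2^j * T (2^j)) \<le> K * a powr \<eta>"
proof -
  have Bu: "Bu \<ge> 0" using pot T01[of x0] x0 by auto
  define B' where "B' = max (Bu * x0 powr (\<alpha>-\<eta>)) x0"
  have TB: "T (2^j) \<le> B' * (2^j) powr (\<eta>-1)" for j :: nat
  proof (cases "(2::real)^j \<ge> x0")
    case True
    have "T (2^j) \<le> Bu * ((2^j)/x0) powr (-\<alpha>+\<eta>)" using pot True by auto
    also have "\<dots> = Bu * x0 powr (\<alpha>-\<eta>) * (2^j) powr (-\<alpha>+\<eta>)"
      using x0 by (simp add: powr_divide powr_minus divide_simps)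
        (simp add: powr_add[symmetric] powr_minus[symmetric] algebra_simps)
    also have "\<dots> \<le> Bu * x0 powr (\<alpha>-\<eta>) * (2^j) powr (\<eta>-1)"
      using \<alpha> Bu by (intro mult_left_mono powr_mono) auto
    also have "\<dots> \<le> B' * (2^j) powr (\<eta>-1)"
      by (intro mult_right_mono) (auto simp: B'_def)
    finally show ?thesis .
  next
    case False
    have "(2::real)^j \<ge> 1" by simp
    have "(2^j) powr (-1) \<le> ((2::real)^j) powr (\<eta>-1)" using \<eta> by (intro powr_mono) auto
    moreover have "(2^j) powr (-1) = 1 / (2::real)^j" by (simp add: powr_minus_divide)
    ultimately have "1 / x0 \<le> ((2::real)^j) powr (\<eta>-1)" using False x0
      by (smt (verit) frac_le zero_less_power)
    then have "1 \<le> x0 * ((2::real)^j) powr (\<eta>-1)" using x0 by (simp add: field_simps)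
    also have "\<dots> \<le> B' * (2^j) powr (\<eta>-1)" by (intro mult_right_mono) (auto simp: B'_def)
    finally show ?thesis using T01 by (meson order_trans)
  qed
  define q where "q = (2::real) powr \<eta>"
  have q: "q > 1" using \<eta> by (simp add: q_def)
  define K where "K = 1 + B' * q / (q - 1)"
  have B'0: "B' \<ge> 1" using x0 by (simp add: B'_def)
  show ?thesis
  proof (intro exI allI impI)
    fix a :: real assume a: "a \<ge> 1"
    define J where "J = nat \<lceil>log 2 a\<rceil>"
    have J: "(2::real)^J \<le> 2 * a" unfolding J_def by (rule two_pow_ceil_log[OF a])
    have "(\<Sum>j<J. 2^j * T (2^j)) \<le> (\<Sum>j<J. 2^j * (B' * (2^j) powr (\<eta>-1)))"
      by (intro sum_mono mult_left_mono TB) auto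
    also have "\<dots> = (\<Sum>j<J. B' * q^j)"
    proof (intro sum.cong refl)
      fix j assume "j \<in> {..<J}"
      have "(2::real)^j * (2^j) powr (\<eta>-1) = (2^j) powr 1 * (2^j) powr (\<eta>-1)" by simp
      also have "\<dots> = (2^j) powr (1 + (\<eta>-1))" by (rule powr_add[symmetric])
      also have "\<dots> = (2^j) powr \<eta>" by simp
      also have "\<dots> = q^j" by (simp add: q_def powr_realpow[symmetric] powr_powr mult.commute)
      finally show "2^j * (B' * (2^j) powr (\<eta>-1)) = B' * q^j" by (simp add: algebra_simps)
    qed
    also have "\<dots> = B' * ((q^J - 1) / (q - 1))"
      using q by (simp add: sum_distrib_left[symmetric] sum_gp_strict field_simps)
    also have "\<dots> \<le> B' * (q^J / (q - 1))"
      using q B'0 by (intro mult_left_mono divide_right_mono) auto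
    also have "\<dots> \<le> B' * ((q * a powr \<eta>) / (q - 1))"
    proof -
      have "q^J = ((2::real)^J) powr \<eta>" by (simp add: q_def powr_realpow[symmetric] powr_powr mult.commute)
      also have "\<dots> \<le> (2 * a) powr \<eta>" using J \<eta> by (intro powr_mono2) auto
      also have "(2 * a) powr \<eta> = q * a powr \<eta>" using a by (simp add: q_def powr_mult)
      finally have "q^J \<le> q * a powr \<eta>" .
      then show ?thesis using q B'0 by (intro mult_left_mono divide_right_mono) auto
    qed
    finally have S0: "(\<Sum>j<J. 2^j * T (2^j)) \<le> B' * ((q * a powr \<eta>) / (q - 1))" .
    have "B' * ((q * a powr \<eta>) / (q - 1)) = B' * q / (q - 1) * a powr \<eta>" by simp
    with S0 have S: "(\<Sum>j<J. 2^j * T (2^j)) \<le> B' * q / (q - 1) * a powr \<eta>" by simp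
    have "1 \<le> a powr \<eta>" using a \<eta> by (simp add: ge_one_powr_ge_zero)
    then have "1 + (\<Sum>j<J. 2^j * T (2^j)) \<le> a powr \<eta> + B' * q / (q - 1) * a powr \<eta>" using S by linarith
    then show "1 + (\<Sum>j<nat \<lceil>log 2 a\<rceil>. 2^j * T (2^j)) \<le> K * a powr \<eta>"
      by (simp add: K_def J_def algebra_simps)
  qed
qed




lemma asym:
  fixes T Pp :: "real \<Rightarrow> real" and m :: "nat \<Rightarrow> nat" and a :: "nat \<Rightarrow> real"
  assumes Tanti: "\<And>x y. x \<le> y \<Longrightarrow> T y \<le> T x"
    and T01: "\<And>x. 0 \<le> T x \<and> T x \<le> 1"
    and Tpos: "eventually (\<lambda>x. T x > 0) at_top"
    and ratio: "((\<lambda>x. T (2*x) / T x) \<longlongrightarrow> 2 powr (-\<alpha>)) at_top"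
    and \<alpha>: "\<alpha> \<ge> 1"
    and Panti: "\<And>x y. x \<le> y \<Longrightarrow> Pp y \<le> Pp x"
    and Pbal: "((\<lambda>x. Pp x / T x) \<longlongrightarrow> p) at_top" and p: "p > 0"
    and m_inf: "filterlim m at_top sequentially"
    and mC: "\<exists>C. \<forall>n\<ge>1. real (m n) \<le> C * real n powr \<kappa>"
    and \<kappa>: "\<kappa> > 0" "\<alpha> > 1 \<Longrightarrow> \<kappa> < c0 / (1 - 1/\<alpha>)" and c0: "c0 > 0"
    and an: "(\<lambda>n. real (m n) * Pp (a n)) \<longlonglongrightarrow> 1"
    and c: "c > 0"
  shows "eventually (\<lambda>n. 1 \<le> a n \<and> real (m n) * real n powr (-c0) *
            (1 + (\<Sum>j<nat \<lceil>log 2 (a n)\<rceil>. 2^j * T (2^j))) / a n \<le> c) sequentially"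
proof -
  obtain \<eta> where \<eta>: "0 < \<eta>" "\<eta> < 1" and \<eta>c: "\<kappa> * (1 - (1-\<eta>)/(\<alpha>+\<eta>)) < c0"
    using choose_eta[OF \<alpha> \<kappa>(1) c0 \<kappa>(2)] by auto
  obtain x0 Bu bl where x0: "x0 \<ge> 1" and bl: "bl > 0"
    and pot: "\<forall>x\<ge>x0. bl * (x/x0) powr (-\<alpha>-\<eta>) \<le> T x \<and> T x \<le> Bu * (x/x0) powr (-\<alpha>+\<eta>)"
    using potter_aux[of T, OF Tanti Tpos ratio \<eta>(1)] \<eta> \<alpha> by auto
  obtain K where K: "\<forall>a\<ge>1. 1 + (\<Sum>j<nat \<lceil>log 2 a\<rceil>. 2^j * T (2^j)) \<le> K * a powr \<eta>"
    using dyadic_sum_bound[of T x0 \<eta> \<alpha> Bu] T01 x0 \<eta> \<alpha> pot by auto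
  have K0: "K \<ge> 0"
  proof -
    have "0 \<le> 1 + (\<Sum>j<nat \<lceil>log 2 (1::real)\<rceil>. 2^j * T (2^j))" by simp
    then show ?thesis using K[rule_format, of 1] by simp
  qed
  obtain C where C: "\<forall>n\<ge>1. real (m n) \<le> C * real n powr \<kappa>" using mC by auto
  have mreal: "filterlim (\<lambda>n. real (m n)) at_top sequentially"
    by (rule filterlim_compose[OF filterlim_real_sequentially m_inf])
  have Pp0: "(\<lambda>n. Pp (a n)) \<longlonglongrightarrow> 0"
  proof -
    have "(\<lambda>n. (real (m n) * Pp (a n)) * inverse (real (m n))) \<longlonglongrightarrow> 1 * 0"
      by (intro tendsto_mult an tendsto_inverse_0_at_top mreal)
    moreover have "eventually (\<lambda>n. (real (m n) * Pp (a n)) * inverse (real (m n)) = Pp (a n)) sequentially"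
      using filterlim_at_top_dense[THEN iffD1, OF mreal, rule_format, of 0] by eventually_elim auto
    ultimately show ?thesis by (simp add: tendsto_cong)
  qed
  have Ppos: "eventually (\<lambda>x. Pp x > 0) at_top"
  proof -
    have "eventually (\<lambda>x. Pp x / T x > 0) at_top" using order_tendstoD(1)[OF Pbal p] .
    then show ?thesis
    proof eventually_elim
      case (elim x) then show ?case using T01[of x] by (auto simp: zero_less_divide_iff)
    qed
  qed
  have a_inf: "filterlim a at_top sequentially"
    unfolding filterlim_at_top
  proof
    fix Z :: real
    obtain N where N: "\<And>x. x \<ge> N \<Longrightarrow> Pp x > 0" using Ppos by (auto simp: eventually_at_top_linorder)
    define x' where "x' = max N Z"
    have "Pp x' > 0" using N by (simp add: x'_def)
    then have "eventually (\<lambda>n. Pp (a n) < Pp x') sequentially" using order_tendstoD(2)[OF Pp0] by auto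
    then show "eventually (\<lambda>n. Z \<le> a n) sequentially"
    proof eventually_elim
      case (elim n)
      then have "\<not> a n \<le> x'" using Panti[of "a n" x'] by auto
      then show ?case by (auto simp: x'_def)
    qed
  qed
  define s where "s = \<alpha> + \<eta>"
  have s: "s > 0" "s > 1" using \<alpha> \<eta> by (auto simp: s_def)
  define e where "e = 1 - (1-\<eta>)/s"
  have e0: "e \<ge> 0" using s \<eta> by (simp add: e_def field_simps)
  have ec: "\<kappa> * e < c0" using \<eta>c by (simp add: e_def s_def)
  define c1 where "c1 = x0 * (bl * p / 4) powr (1/s)"
  have c1: "c1 > 0" using x0 bl p by (simp add: c1_def)
  define D where "D = K * c1 powr (\<eta>-1) * C powr e"
  have lim0: "(\<lambda>n. D * real n powr (\<kappa> * e - c0)) \<longlonglongrightarrow> D * 0"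
    using ec by (intro tendsto_mult tendsto_const tendsto_neg_powr filterlim_real_sequentially) auto
  have E1: "eventually (\<lambda>n. max x0 1 \<le> a n) sequentially"
    using a_inf unfolding filterlim_at_top by blast
  have E2: "eventually (\<lambda>n. Pp (a n) / T (a n) > p/2) sequentially"
    using filterlim_iff[THEN iffD1, OF a_inf, rule_format, OF order_tendstoD(1)[OF Pbal, of "p/2"]] p by auto
  have E3: "eventually (\<lambda>n. real (m n) * Pp (a n) < 2) sequentially"
    using order_tendstoD(2)[OF an, of 2] by auto
  have E4: "eventually (\<lambda>n. 1 \<le> real (m n) \<and> 1 \<le> n) sequentially"
    using filterlim_at_top[THEN iffD1, OF mreal, rule_format, of 1] eventually_ge_at_top[of 1]
    by eventually_elim auto
  have E5: "eventually (\<lambda>n. D * real n powr (\<kappa> * e - c0) < c) sequentially"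
    using order_tendstoD(2)[OF lim0, of c] c by auto
  from E1 E2 E3 E4 E5 show ?thesis
  proof eventually_elim
    case (elim n)
    define mm where "mm = real (m n)"
    define an where "an = a n"
    have a1: "an \<ge> 1" "an \<ge> x0" using elim by (auto simp: an_def)
    have mm: "mm \<ge> 1" using elim by (simp add: mm_def)
    have n1: "n \<ge> 1" using elim by simp
    have Tpos': "T an > 0"
    proof (rule ccontr)
      assume "\<not> T an > 0" then have "T an = 0" using T01[of an] by auto
      then show False using elim(2) p by (simp add: an_def)
    qed
    have "Pp an > (p/2) * T an" using elim(2) Tpos' by (simp add: an_def field_simps)
    moreover have "mm * Pp an < 2" using elim(3) by (simp add: mm_def an_def)
    ultimately have "mm * ((p/2) * T an) < 2" using mm
      by (smt (verit, best) mult_less_cancel_left_pos)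
    then have Tup: "T an < 4 / (p * mm)" using p mm by (simp add: field_simps)
    have Tlo: "bl * (an/x0) powr (-s) \<le> T an" using pot a1 by (simp add: s_def)
    have "bl * (an/x0) powr (-s) < 4 / (p * mm)" using Tup Tlo by linarith
    then have "bl * p * mm / 4 < (an/x0) powr s"
      using p mm x0 a1 bl by (simp add: powr_minus field_simps)
    then have "(bl * p * mm / 4) powr (1/s) < ((an/x0) powr s) powr (1/s)"
      using bl p mm s by (intro powr_less_mono2) auto
    also have "\<dots> = an / x0" using s a1 x0 by (simp add: powr_powr)
    finally have "(bl * p / 4) powr (1/s) * mm powr (1/s) < an / x0"
      using bl p mm by (simp add: powr_mult[symmetric])
    then have alo: "c1 * mm powr (1/s) \<le> an" using x0 by (simp add: c1_def field_simps)
    have cm0: "c1 * mm powr (1/s) > 0" using c1 mm by simp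
    have "an powr (\<eta>-1) \<le> (c1 * mm powr (1/s)) powr (\<eta>-1)"
      using alo cm0 \<eta> by (intro powr_mono2') auto
    also have "\<dots> = c1 powr (\<eta>-1) * mm powr ((\<eta>-1)/s)"
      using c1 mm by (simp add: powr_mult powr_powr)
    finally have apow: "an powr (\<eta>-1) \<le> c1 powr (\<eta>-1) * mm powr ((\<eta>-1)/s)" .
    have mme: "mm * mm powr ((\<eta>-1)/s) = mm powr e"
    proof -
      have "mm * mm powr ((\<eta>-1)/s) = mm powr 1 * mm powr ((\<eta>-1)/s)" using mm by simp
      also have "\<dots> = mm powr (1 + (\<eta>-1)/s)" by (rule powr_add[symmetric])
      also have "1 + (\<eta>-1)/s = e" using s by (simp add: e_def diff_divide_distrib)
      finally show ?thesis .
    qed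
    have Cpos: "C > 0"
    proof -
      have "1 \<le> C * real n powr \<kappa>" using C n1 mm by (auto simp: mm_def intro: order_trans)
      then show ?thesis using n1 by (smt (verit, best) mult_nonpos_nonneg powr_ge_zero)
    qed
    have mmC: "mm powr e \<le> C powr e * real n powr (\<kappa> * e)"
    proof -
      have "mm powr e \<le> (C * real n powr \<kappa>) powr e"
        using C n1 mm e0 by (intro powr_mono2) (auto simp: mm_def)
      also have "\<dots> = C powr e * real n powr (\<kappa> * e)"
        using Cpos n1 by (simp add: powr_mult powr_powr)
      finally show ?thesis .
    qed
    have Sb: "1 + (\<Sum>j<nat \<lceil>log 2 an\<rceil>. 2^j * T (2^j)) \<le> K * an powr \<eta>" using K a1 by auto
    have "mm * real n powr (-c0) * (1 + (\<Sum>j<nat \<lceil>log 2 an\<rceil>. 2^j * T (2^j))) / an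
        \<le> mm * real n powr (-c0) * (K * an powr \<eta>) / an"
      using Sb mm a1 by (intro divide_right_mono mult_left_mono) auto
    also have "mm * real n powr (-c0) * (K * an powr \<eta>) / an = mm * real n powr (-c0) * (K * an powr (\<eta>-1))"
      using a1 by (simp add: powr_diff)
    also have "\<dots> \<le> mm * real n powr (-c0) * (K * (c1 powr (\<eta>-1) * mm powr ((\<eta>-1)/s)))"
      using apow K0 mm by (intro mult_left_mono) auto
    also have "\<dots> = K * c1 powr (\<eta>-1) * real n powr (-c0) * (mm * mm powr ((\<eta>-1)/s))"
      by (simp add: algebra_simps)
    also have "\<dots> = K * c1 powr (\<eta>-1) * real n powr (-c0) * mm powr e" by (simp add: mme)
    also have "\<dots> \<le> K * c1 powr (\<eta>-1) * real n powr (-c0) * (C powr e * real n powr (\<kappa> * e))"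
      using mmC K0 c1 by (intro mult_left_mono) auto
    also have "\<dots> = D * (real n powr (\<kappa> * e) * real n powr (-c0))" by (simp add: D_def algebra_simps)
    also have "\<dots> = D * real n powr (\<kappa> * e - c0)" by (simp add: powr_add[symmetric])
    also have "\<dots> < c" using elim by simp
    finally show ?case using a1 by (simp add: mm_def an_def)
  qed
qed




lemma (in prob_space) chernoff_core:
  fixes Y Bs :: "nat \<Rightarrow> 'a \<Rightarrow> real" and I :: "nat set" and lam q u :: real
  assumes fin: "finite I"
    and Ym[measurable]: "\<And>i. i\<in>I \<Longrightarrow> Y i \<in> borel_measurable M"
    and Bm[measurable]: "\<And>i. i\<in>I \<Longrightarrow> Bs i \<in> borel_measurable M"
    and B01: "\<And>i \<omega>. Bs i \<omega> = 0 \<or> Bs i \<omega> = 1"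
    and Ybd: "\<And>i \<omega>. i\<in>I \<Longrightarrow> \<omega> \<in> space M \<Longrightarrow> \<bar>lam * Y i \<omega>\<bar> \<le> 1"
    and prodX: "\<And>A. A \<subseteq> I \<Longrightarrow> (\<integral>\<omega>. (\<Prod>i\<in>A. exp (lam * Y i \<omega>) - 1) \<partial>M) = (\<Prod>i\<in>A. u)"
    and prodB: "\<And>A. A \<subseteq> I \<Longrightarrow> (\<integral>\<omega>. (\<Prod>i\<in>A. Bs i \<omega>) \<partial>M) = (\<Prod>i\<in>A. q)"
    and cross: "\<And>A. A \<subseteq> I \<Longrightarrow> (\<integral>\<omega>. (\<Prod>i\<in>A. Bs i \<omega>) * (\<Prod>i\<in>A. exp (lam * Y i \<omega>) - 1) \<partial>M)
        = (\<integral>\<omega>. (\<Prod>i\<in>A. Bs i \<omega>) \<partial>M) * (\<integral>\<omega>. (\<Prod>i\<in>A. exp (lam * Y i \<omega>) - 1) \<partial>M)"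
    and q: "0 \<le> q" "q \<le> 1" and u: "u \<ge> -1"
  shows "(\<integral>\<omega>. exp (lam * (\<Sum>i\<in>I. Y i \<omega> * Bs i \<omega>)) \<partial>M) \<le> exp (real (card I) * q * u)"
proof -
  define f where "f i \<omega> = Bs i \<omega> * (exp (lam * Y i \<omega>) - 1)" for i \<omega>
  have pw: "exp (lam * (\<Sum>i\<in>I. Y i \<omega> * Bs i \<omega>)) = (\<Prod>i\<in>I. 1 + f i \<omega>)" for \<omega>
  proof -
    have "exp (lam * (\<Sum>i\<in>I. Y i \<omega> * Bs i \<omega>)) = exp (\<Sum>i\<in>I. lam * Y i \<omega> * Bs i \<omega>)"
      by (simp add: sum_distrib_left mult.assoc)
    also have "\<dots> = (\<Prod>i\<in>I. exp (lam * Y i \<omega> * Bs i \<omega>))" using fin by (simp add: exp_sum)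
    also have "\<dots> = (\<Prod>i\<in>I. 1 + f i \<omega>)"
    proof (intro prod.cong refl)
      fix i show "exp (lam * Y i \<omega> * Bs i \<omega>) = 1 + f i \<omega>"
        using B01[of i \<omega>] by (auto simp: f_def)
    qed
    finally show ?thesis .
  qed
  have fm[measurable]: "f i \<in> borel_measurable M" if "i \<in> I" for i
    using that unfolding f_def by measurable
  have fbd: "\<bar>f i \<omega>\<bar> \<le> 2" if "i \<in> I" "\<omega> \<in> space M" for i \<omega>
  proof -
    have y: "\<bar>lam * Y i \<omega>\<bar> \<le> 1" using Ybd that .
    have "exp (lam * Y i \<omega>) \<le> exp 1" using y by (subst exp_le_cancel_iff) auto
    moreover have "exp (1::real) \<le> 3" using exp_le by simp
    moreover have "exp (lam * Y i \<omega>) > 0" by simp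
    ultimately have "\<bar>exp (lam * Y i \<omega>) - 1\<bar> \<le> 2" unfolding abs_le_iff by linarith
    then show ?thesis using B01[of i \<omega>] by (auto simp: f_def)
  qed
  have int: "integrable M (\<lambda>\<omega>. \<Prod>i\<in>A. f i \<omega>)" if "A \<subseteq> I" for A
  proof (rule integrable_const_bound[where B="2 ^ card A"])
    show "AE \<omega> in M. norm (\<Prod>i\<in>A. f i \<omega>) \<le> 2 ^ card A"
    proof (rule AE_I2)
      fix \<omega> assume \<omega>: "\<omega> \<in> space M"
      have "norm (\<Prod>i\<in>A. f i \<omega>) = (\<Prod>i\<in>A. \<bar>f i \<omega>\<bar>)" by (simp add: abs_prod)
      also have "\<dots> \<le> (\<Prod>i\<in>A. 2)" using fbd \<omega> that by (intro prod_mono) auto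
      finally show "norm (\<Prod>i\<in>A. f i \<omega>) \<le> 2 ^ card A" by simp
    qed
    show "(\<lambda>\<omega>. \<Prod>i\<in>A. f i \<omega>) \<in> borel_measurable M"
      using that by (intro borel_measurable_prod fm) auto
  qed
  have eq: "(\<integral>\<omega>. (\<Prod>i\<in>A. f i \<omega>) \<partial>M) = (\<Prod>i\<in>A. q * u)" if A: "A \<subseteq> I" for A
  proof -
    have "(\<integral>\<omega>. (\<Prod>i\<in>A. f i \<omega>) \<partial>M) = (\<integral>\<omega>. (\<Prod>i\<in>A. Bs i \<omega>) * (\<Prod>i\<in>A. exp (lam * Y i \<omega>) - 1) \<partial>M)"
      by (simp add: f_def prod.distrib)
    also have "\<dots> = (\<Prod>i\<in>A. q) * (\<Prod>i\<in>A. u)" using cross[OF A] prodX[OF A] prodB[OF A] by simp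
    also have "\<dots> = (\<Prod>i\<in>A. q * u)" by (simp add: power_mult_distrib)
    finally show ?thesis .
  qed
  have "(\<integral>\<omega>. exp (lam * (\<Sum>i\<in>I. Y i \<omega> * Bs i \<omega>)) \<partial>M) = (\<integral>\<omega>. (\<Prod>i\<in>I. 1 + f i \<omega>) \<partial>M)"
    by (simp add: pw)
  also have "\<dots> = (\<Prod>i\<in>I. 1 + q * u)"
    by (rule expand_prod_integral[OF fin int eq])
  also have "\<dots> = (1 + q * u) ^ card I" by simp
  also have "\<dots> \<le> (exp (q * u)) ^ card I"
  proof (rule power_mono)
    have "q * u \<ge> q * (-1)" using q u by (intro mult_left_mono) auto
    then show "0 \<le> 1 + q * u" using q by linarith
  qed simp
  also have "\<dots> = exp (real (card I) * q * u)" by (simp add: exp_of_nat_mult[symmetric] mult.assoc)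
  finally show ?thesis .
qed




lemma (in prob_space) indep_set_to_var:
  assumes ind: "indep_set (sets (vimage_algebra (space M) F MF)) (sets (vimage_algebra (space M) G MG))"
    and Fs: "\<And>\<omega>. \<omega> \<in> space M \<Longrightarrow> F \<omega> \<in> space MF"
    and Gs: "\<And>\<omega>. \<omega> \<in> space M \<Longrightarrow> G \<omega> \<in> space MG"
    and g1: "g1 \<in> borel_measurable MF" and g2: "g2 \<in> borel_measurable MG"
    and V1: "V1 \<in> borel_measurable M" and V2: "V2 \<in> borel_measurable M"
    and e1: "\<And>\<omega>. \<omega> \<in> space M \<Longrightarrow> V1 \<omega> = g1 (F \<omega>)"
    and e2: "\<And>\<omega>. \<omega> \<in> space M \<Longrightarrow> V2 \<omega> = g2 (G \<omega>)"
  shows "indep_var borel V1 borel V2"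
  unfolding indep_var_def indep_vars_def2
proof
  show "\<forall>i\<in>UNIV. random_variable (case_bool borel borel i) (case_bool V1 V2 i)"
    using V1 V2 by (auto split: bool.split)
  have ind': "indep_sets (case_bool (sets (vimage_algebra (space M) F MF)) (sets (vimage_algebra (space M) G MG))) UNIV"
    using ind unfolding indep_set_def .
  show "indep_sets (\<lambda>i. {case_bool V1 V2 i -` A \<inter> space M |A. A \<in> sets (case_bool borel borel i)}) UNIV"
  proof (rule indep_sets_mono_sets[OF ind'])
    fix b :: bool
    show "{case_bool V1 V2 b -` A \<inter> space M |A. A \<in> sets (case_bool borel borel b)}
      \<subseteq> case_bool (sets (vimage_algebra (space M) F MF)) (sets (vimage_algebra (space M) G MG)) b"
    proof (cases b)
      case True
      show ?thesis
      proof
        fix S assume "S \<in> {case_bool V1 V2 b -` A \<inter> space M |A. A \<in> sets (case_bool borel borel b)}"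
        then obtain A where A: "A \<in> sets borel" and S: "S = V1 -` A \<inter> space M" using True by auto
        have "S = F -` (g1 -` A \<inter> space MF) \<inter> space M" using S Fs e1 by auto
        moreover have "g1 -` A \<inter> space MF \<in> sets MF" using g1 A by (rule measurable_sets)
        ultimately show "S \<in> case_bool (sets (vimage_algebra (space M) F MF)) (sets (vimage_algebra (space M) G MG)) b"
          using True in_vimage_algebra[of "g1 -` A \<inter> space MF" MF F "space M"] by simp
      qed
    next
      case False
      show ?thesis
      proof
        fix S assume "S \<in> {case_bool V1 V2 b -` A \<inter> space M |A. A \<in> sets (case_bool borel borel b)}"
        then obtain A where A: "A \<in> sets borel" and S: "S = V2 -` A \<inter> space M" using False by auto
        have "S = G -` (g2 -` A \<inter> space MG) \<inter> space M" using S Gs e2 by auto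
        moreover have "g2 -` A \<inter> space MG \<in> sets MG" using g2 A by (rule measurable_sets)
        ultimately show "S \<in> case_bool (sets (vimage_algebra (space M) F MF)) (sets (vimage_algebra (space M) G MG)) b"
          using False in_vimage_algebra[of "g2 -` A \<inter> space MG" MG G "space M"] by simp
      qed
    qed
  qed
qed

lemma (in prob_space) u_bound:
  fixes Z :: "'a \<Rightarrow> real" and lam :: real
  assumes Z[measurable]: "Z \<in> borel_measurable M" and bd: "\<And>\<omega>. \<omega> \<in> space M \<Longrightarrow> \<bar>lam * Z \<omega>\<bar> \<le> 1"
  shows "(\<integral>\<omega>. exp (lam * Z \<omega>) - 1 \<partial>M) \<le> 2 * \<bar>lam\<bar> * (\<integral>\<omega>. \<bar>Z \<omega>\<bar> \<partial>M)"
    and "(\<integral>\<omega>. exp (lam * Z \<omega>) - 1 \<partial>M) \<ge> -1"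
    and "integrable M (\<lambda>\<omega>. exp (lam * Z \<omega>) - 1)"
proof -
  have pw: "exp x - 1 \<le> 2 * \<bar>x\<bar>" if "\<bar>x\<bar> \<le> 1" for x :: real
  proof (cases "x \<ge> 0")
    case True
    then have "exp x \<le> 1 + x + x^2" using that exp_bound[of x] by auto
    moreover have "x^2 \<le> x" using True that by (simp add: power2_eq_square mult_left_le)
    ultimately show ?thesis using True by auto
  next
    case False
    then have "exp x \<le> 1" by simp
    moreover have "0 \<le> 2 * \<bar>x\<bar>" by simp
    ultimately show ?thesis by linarith
  qed
  have bnd: "\<bar>exp (lam * Z \<omega>) - 1\<bar> \<le> 2" if "\<omega> \<in> space M" for \<omega>
  proof -
    have "exp (lam * Z \<omega>) \<le> exp 1" using bd[OF that] by (subst exp_le_cancel_iff) auto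
    moreover have "exp (1::real) \<le> 3" using exp_le by simp
    moreover have "exp (lam * Z \<omega>) > 0" by simp
    ultimately show ?thesis unfolding abs_le_iff by linarith
  qed
  show int: "integrable M (\<lambda>\<omega>. exp (lam * Z \<omega>) - 1)"
    by (rule integrable_const_bound[where B=2]) (use bnd in auto)
  have intZ: "integrable M (\<lambda>\<omega>. 2 * \<bar>lam\<bar> * \<bar>Z \<omega>\<bar>)"
  proof (cases "lam = 0")
    case True then show ?thesis by simp
  next
    case False
    have "\<bar>Z \<omega>\<bar> \<le> 1 / \<bar>lam\<bar>" if "\<omega> \<in> space M" for \<omega>
      using bd[OF that] False by (simp add: field_simps abs_mult)
    then have "integrable M (\<lambda>\<omega>. \<bar>Z \<omega>\<bar>)"
      by (intro integrable_const_bound[where B="1/\<bar>lam\<bar>"]) auto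
    then show ?thesis by simp
  qed
  have "(\<integral>\<omega>. exp (lam * Z \<omega>) - 1 \<partial>M) \<le> (\<integral>\<omega>. 2 * \<bar>lam\<bar> * \<bar>Z \<omega>\<bar> \<partial>M)"
  proof (rule integral_mono[OF int intZ])
    fix \<omega> assume "\<omega> \<in> space M"
    then have "exp (lam * Z \<omega>) - 1 \<le> 2 * \<bar>lam * Z \<omega>\<bar>" using pw bd by blast
    then show "exp (lam * Z \<omega>) - 1 \<le> 2 * \<bar>lam\<bar> * \<bar>Z \<omega>\<bar>" by (simp add: abs_mult)
  qed
  also have "\<dots> = 2 * \<bar>lam\<bar> * (\<integral>\<omega>. \<bar>Z \<omega>\<bar> \<partial>M)" by simp
  finally show "(\<integral>\<omega>. exp (lam * Z \<omega>) - 1 \<partial>M) \<le> 2 * \<bar>lam\<bar> * (\<integral>\<omega>. \<bar>Z \<omega>\<bar> \<partial>M)" .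
  have "(\<integral>\<omega>. -1 \<partial>M) \<le> (\<integral>\<omega>. exp (lam * Z \<omega>) - 1 \<partial>M)"
    using int by (intro integral_mono) auto
  then show "(\<integral>\<omega>. exp (lam * Z \<omega>) - 1 \<partial>M) \<ge> -1" by (simp add: prob_space)
qed

lemma det_bound:
  fixes g :: "nat \<Rightarrow> real" and \<sigma> :: "nat \<Rightarrow> nat"
  assumes bij: "bij_betw \<sigma> {1..N} {1..N}" and gb: "\<And>i. \<bar>g i\<bar> \<le> D"
  shows "\<bar>\<Sum>j \<in> {j \<in> {1..N}. P (\<sigma> j)} - {1..l}. g (\<sigma> j)\<bar>
     \<le> \<bar>\<Sum>i\<in>{1..N}. g i * (if P i then 1 else 0)\<bar> + real l * D"
proof -
  define H where "H = {j \<in> {1..N}. P (\<sigma> j)}"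
  have fin: "finite H" by (simp add: H_def)
  have split: "(\<Sum>j\<in>H. g (\<sigma> j)) = (\<Sum>j\<in>H - {1..l}. g (\<sigma> j)) + (\<Sum>j\<in>H \<inter> {1..l}. g (\<sigma> j))"
    using sum.Int_Diff[OF fin, of "\<lambda>j. g (\<sigma> j)" "{1..l}"] by simp
  have "(\<Sum>j\<in>H. g (\<sigma> j)) = (\<Sum>j\<in>{1..N}. g (\<sigma> j) * (if P (\<sigma> j) then 1 else 0))"
    unfolding H_def by (subst sum.inter_filter) (auto intro!: sum.cong)
  also have "\<dots> = (\<Sum>i\<in>{1..N}. g i * (if P i then 1 else 0))"
    using sum.reindex_bij_betw[OF bij, of "\<lambda>i. g i * (if P i then 1 else 0)"] by simp
  finally have e: "(\<Sum>j\<in>H. g (\<sigma> j)) = (\<Sum>i\<in>{1..N}. g i * (if P i then 1 else 0))" .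
  have "\<bar>\<Sum>j\<in>H \<inter> {1..l}. g (\<sigma> j)\<bar> \<le> (\<Sum>j\<in>H \<inter> {1..l}. \<bar>g (\<sigma> j)\<bar>)" by (rule sum_abs)
  also have "\<dots> \<le> (\<Sum>j\<in>H \<inter> {1..l}. D)" using gb by (intro sum_mono) auto
  also have "\<dots> = real (card (H \<inter> {1..l})) * D" by simp
  also have "\<dots> \<le> real l * D"
  proof -
    have D0: "D \<ge> 0" using gb[of 0] by linarith
    have "card (H \<inter> {1..l}) \<le> card {1..l}" by (intro card_mono) auto
    then show ?thesis using D0 by (intro mult_right_mono) auto
  qed
  finally have "\<bar>\<Sum>j\<in>H \<inter> {1..l}. g (\<sigma> j)\<bar> \<le> real l * D" .
  then show ?thesis using split e unfolding H_def[symmetric] by linarith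
qed




lemma exp_decay_lim:
  fixes \<epsilon> \<gamma> :: real
  assumes \<epsilon>: "\<epsilon> > 0" and \<gamma>: "\<gamma> > 0"
  shows "(\<lambda>n::nat. 2 * (real n + 1) * exp (- (\<epsilon> * real n powr \<gamma> / 4))) \<longlonglongrightarrow> 0"
proof -
  define x where "x n = \<epsilon> * real n powr \<gamma> / 4" for n :: nat
  define K where "K = nat \<lceil>1/\<gamma>\<rceil>"
  define c where "c = 4 * (4/\<epsilon>) powr (1/\<gamma>)"
  have xinf: "filterlim x at_top sequentially"
    unfolding filterlim_at_top
  proof
    fix Z :: real
    define W where "W = max 1 (4 * Z / \<epsilon>)"
    have W: "W \<ge> 1" "4 * Z / \<epsilon> \<le> W" by (auto simp: W_def)
    have "eventually (\<lambda>n. real n \<ge> W powr (1/\<gamma>)) sequentially"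
      using eventually_ge_at_top[of "nat \<lceil>W powr (1/\<gamma>)\<rceil>"] by eventually_elim linarith
    then show "eventually (\<lambda>n. Z \<le> x n) sequentially"
    proof eventually_elim
      case (elim n)
      have "W = (W powr (1/\<gamma>)) powr \<gamma>" using W \<gamma> by (simp add: powr_powr)
      also have "\<dots> \<le> real n powr \<gamma>" using elim W \<gamma> by (intro powr_mono2) auto
      finally have "4 * Z / \<epsilon> \<le> real n powr \<gamma>" using W by linarith
      then show ?case using \<epsilon> by (simp add: x_def field_simps)
    qed
  qed
  have g: "(\<lambda>n. x n ^ K / exp (x n)) \<longlonglongrightarrow> 0"
    by (rule filterlim_compose[OF tendsto_power_div_exp_0 xinf])
  have lim: "(\<lambda>n. c * (x n ^ K / exp (x n))) \<longlonglongrightarrow> c * 0"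
    by (intro tendsto_mult tendsto_const g)
  have ev: "eventually (\<lambda>n. 2 * (real n + 1) * exp (- (\<epsilon> * real n powr \<gamma> / 4)) \<le> c * (x n ^ K / exp (x n))) sequentially"
    using filterlim_at_top[THEN iffD1, OF xinf, rule_format, of 1] eventually_ge_at_top[of 1]
  proof eventually_elim
    case (elim n)
    have n1: "real n \<ge> 1" using elim by simp
    have "real n = (real n powr \<gamma>) powr (1/\<gamma>)" using n1 \<gamma> by (simp add: powr_powr)
    also have "real n powr \<gamma> = (4/\<epsilon>) * x n" using \<epsilon> by (simp add: x_def)
    also have "((4/\<epsilon>) * x n) powr (1/\<gamma>) = (4/\<epsilon>) powr (1/\<gamma>) * x n powr (1/\<gamma>)"
      using \<epsilon> elim by (intro powr_mult)
    also have "x n powr (1/\<gamma>) \<le> x n powr (real K)"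
    proof (rule powr_mono)
      have "1/\<gamma> \<le> of_int \<lceil>1/\<gamma>\<rceil>" by linarith
      then show "1/\<gamma> \<le> real K" using \<gamma> by (simp add: K_def)
    qed (use elim in auto)
    also have "x n powr (real K) = x n ^ K" using elim by (simp add: powr_realpow)
    finally have nb: "real n \<le> (4/\<epsilon>) powr (1/\<gamma>) * x n ^ K" by (meson mult_left_mono powr_ge_zero)
    have "2 * (real n + 1) \<le> 4 * real n" using n1 by simp
    also have "\<dots> \<le> c * x n ^ K" using nb by (simp add: c_def)
    finally have A: "2 * (real n + 1) \<le> c * x n ^ K" .
    have "2 * (real n + 1) * exp (- (\<epsilon> * real n powr \<gamma> / 4)) = 2 * (real n + 1) / exp (x n)"
      by (simp add: x_def exp_minus field_simps)
    also have "\<dots> \<le> c * x n ^ K / exp (x n)" using A by (intro divide_right_mono) auto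
    finally show ?case by simp
  qed
  show ?thesis
  proof (rule tendsto_sandwich[OF _ ev tendsto_const[of 0]])
    show "eventually (\<lambda>n. 0 \<le> 2 * (real n + 1) * exp (- (\<epsilon> * real n powr \<gamma> / 4))) sequentially" by simp
    show "(\<lambda>n. c * (x n ^ K / exp (x n))) \<longlonglongrightarrow> 0" using lim by simp
  qed
qed




lemma chernoff_nk:
  fixes M :: "'a measure" and R :: "nat \<Rightarrow> nat \<Rightarrow> 'a \<Rightarrow> real set" and X :: "nat \<Rightarrow> 'a \<Rightarrow> real"
    and an \<delta> lam :: real and n k N :: nat
  assumes M: "prob_space M"
    and R_indep: "prob_space.indep_vars M (\<lambda>_. count_space (Pow {..n}))
                     (\<lambda>j \<omega>. grid_trace n (R n j \<omega>)) {1..}"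
    and R_ident: "\<And>j. j \<ge> 1 \<Longrightarrow>
        distr M (count_space (Pow {..n})) (\<lambda>\<omega>. grid_trace n (R n j \<omega>))
      = distr M (count_space (Pow {..n})) (\<lambda>\<omega>. grid_trace n (R n 1 \<omega>))"
    and X_indep: "prob_space.indep_vars M (\<lambda>_. borel) X {1..}"
    and X_ident: "\<And>j. j \<ge> 1 \<Longrightarrow> distr M borel (X j) = distr M borel (X 1)"
    and XR_indep: "prob_space.indep_set M
        (sets (vimage_algebra (space M) (\<lambda>\<omega>. \<lambda>j\<in>{1..}. X j \<omega>) (PiM {1..} (\<lambda>_. borel))))
        (sets (vimage_algebra (space M)
           (\<lambda>\<omega>. \<lambda>nj\<in>UNIV \<times> {1..}. grid_trace (fst nj) (R (fst nj) (snd nj) \<omega>))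
           (PiM (UNIV \<times> {1..}) (\<lambda>nj. count_space (Pow {..fst nj})))))"
    and kn: "k \<le> n" and an: "an > 0" and \<delta>: "\<delta> \<ge> 0" and lam: "\<bar>lam\<bar> * (\<delta> * an) \<le> 1"
  shows "(\<integral>\<omega>. exp (lam * (\<Sum>i\<in>{1..N}. (X i \<omega> * (if \<bar>X i \<omega>\<bar> / an \<le> \<delta> then 1 else 0))
                 * (if real k / real n \<in> R n i \<omega> then 1 else 0))) \<partial>M)
     \<le> exp (real N * measure M {\<omega> \<in> space M. real k / real n \<in> R n 1 \<omega>}
              * (\<integral>\<omega>. exp (lam * (X 1 \<omega> * (if \<bar>X 1 \<omega>\<bar> / an \<le> \<delta> then 1 else 0))) - 1 \<partial>M))"
proof -
  interpret P: prob_space M by (rule M)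
  have Xm[measurable]: "X i \<in> borel_measurable M" if "i \<ge> 1" for i
    using X_indep that unfolding P.indep_vars_def2 by auto
  have Gm[measurable]: "(\<lambda>\<omega>. grid_trace n (R n i \<omega>)) \<in> measurable M (count_space (Pow {..n}))" if "i \<ge> 1" for i
    using R_indep that unfolding P.indep_vars_def2 by auto
  define hY where "hY x = x * (if \<bar>x\<bar> / an \<le> \<delta> then 1 else (0::real))" for x
  define hU where "hU x = exp (lam * hY x) - 1" for x
  define hB where "hB S = (if k \<in> S then 1 else (0::real))" for S
  have hYm[measurable]: "hY \<in> borel_measurable borel" unfolding hY_def by measurable
  have hUm[measurable]: "hU \<in> borel_measurable borel" unfolding hU_def by measurable
  have hBm[measurable]: "hB \<in> borel_measurable (count_space (Pow {..n}))" by simp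
  define Y where "Y i \<omega> = hY (X i \<omega>)" for i \<omega>
  define Bs where "Bs i \<omega> = hB (grid_trace n (R n i \<omega>))" for i \<omega>
  have Bs_eq: "Bs i \<omega> = (if real k / real n \<in> R n i \<omega> then 1 else 0)" for i \<omega>
    using kn by (simp add: Bs_def hB_def grid_trace_def)
  define q where "q = measure M {\<omega> \<in> space M. real k / real n \<in> R n 1 \<omega>}"
  define u where "u = (\<integral>\<omega>. hU (X 1 \<omega>) \<partial>M)"
  have Ybd: "\<bar>lam * Y i \<omega>\<bar> \<le> 1" for i \<omega>
  proof -
    have "\<bar>Y i \<omega>\<bar> \<le> \<delta> * an" using an \<delta> by (auto simp: Y_def hY_def field_simps)
    then have "\<bar>lam\<bar> * \<bar>Y i \<omega>\<bar> \<le> \<bar>lam\<bar> * (\<delta> * an)" by (intro mult_left_mono) auto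
    then show ?thesis using lam by (simp add: abs_mult)
  qed
  have hUbd: "\<bar>hU x\<bar> \<le> 2" for x
  proof -
    have y: "\<bar>lam * hY x\<bar> \<le> 1"
    proof -
      have "\<bar>hY x\<bar> \<le> \<delta> * an" using an \<delta> by (auto simp: hY_def field_simps)
      then have "\<bar>lam\<bar> * \<bar>hY x\<bar> \<le> \<bar>lam\<bar> * (\<delta> * an)" by (intro mult_left_mono) auto
      then show ?thesis using lam by (simp add: abs_mult)
    qed
    have "exp (lam * hY x) \<le> exp 1" using y by (subst exp_le_cancel_iff) auto
    moreover have "exp (1::real) \<le> 3" using exp_le by simp
    moreover have "exp (lam * hY x) > 0" by simp
    ultimately show ?thesis unfolding abs_le_iff hU_def by linarith
  qed
  have hBbd: "\<bar>hB S\<bar> \<le> 1" for S by (simp add: hB_def)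
  have intU: "integrable M (\<lambda>\<omega>. hU (X i \<omega>))" if "i \<ge> 1" for i
    using that hUbd by (intro P.integrable_const_bound[where B=2]) auto
  have EU: "(\<integral>\<omega>. hU (X i \<omega>) \<partial>M) = u" if "i \<ge> 1" for i
  proof -
    have "(\<integral>\<omega>. hU (X i \<omega>) \<partial>M) = integral\<^sup>L (distr M borel (X i)) hU"
      using that by (simp add: integral_distr)
    also have "\<dots> = integral\<^sup>L (distr M borel (X 1)) hU" using X_ident[OF that] by simp
    also have "\<dots> = u" by (simp add: integral_distr u_def)
    finally show ?thesis .
  qed
  have indU: "P.indep_vars (\<lambda>_. borel) (\<lambda>i \<omega>. hU (X i \<omega>)) A" if "A \<subseteq> {1..N}" for A
    using that by (intro P.indep_vars_compose2[OF P.indep_vars_subset[OF X_indep]]) auto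
  have prodX: "(\<integral>\<omega>. (\<Prod>i\<in>A. exp (lam * Y i \<omega>) - 1) \<partial>M) = (\<Prod>i\<in>A. u)" if A: "A \<subseteq> {1..N}" for A
  proof -
    have fA: "finite A" using A finite_subset by blast
    have "(\<integral>\<omega>. (\<Prod>i\<in>A. exp (lam * Y i \<omega>) - 1) \<partial>M) = (\<integral>\<omega>. (\<Prod>i\<in>A. hU (X i \<omega>)) \<partial>M)"
      by (simp add: Y_def hU_def)
    also have "\<dots> = (\<Prod>i\<in>A. \<integral>\<omega>. hU (X i \<omega>) \<partial>M)"
      using A by (intro P.indep_vars_lebesgue_integral fA indU intU) auto
    also have "\<dots> = (\<Prod>i\<in>A. u)" using A EU by (intro prod.cong) auto
    finally show ?thesis .
  qed
  have intB: "integrable M (Bs i)" if "i \<ge> 1" for i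
    unfolding Bs_def using that hBbd by (intro P.integrable_const_bound[where B=1]) auto
  have Bmeas: "Bs i \<in> borel_measurable M" if "i \<ge> 1" for i
    unfolding Bs_def using that by measurable
  have EB: "(\<integral>\<omega>. Bs i \<omega> \<partial>M) = q" if "i \<ge> 1" for i
  proof -
    have "(\<integral>\<omega>. Bs i \<omega> \<partial>M) = integral\<^sup>L (distr M (count_space (Pow {..n})) (\<lambda>\<omega>. grid_trace n (R n i \<omega>))) hB"
      using that by (simp add: integral_distr Bs_def)
    also have "\<dots> = integral\<^sup>L (distr M (count_space (Pow {..n})) (\<lambda>\<omega>. grid_trace n (R n 1 \<omega>))) hB"
      using R_ident[OF that] by simp
    also have "\<dots> = (\<integral>\<omega>. Bs 1 \<omega> \<partial>M)" by (simp add: integral_distr Bs_def)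
    also have "\<dots> = (\<integral>\<omega>. indicator {\<omega> \<in> space M. real k / real n \<in> R n 1 \<omega>} \<omega> \<partial>M)"
      by (intro Bochner_Integration.integral_cong) (auto simp: Bs_eq indicator_def)
    also have "\<dots> = q"
    proof -
      have "{\<omega> \<in> space M. real k / real n \<in> R n 1 \<omega>} = {\<omega> \<in> space M. Bs 1 \<omega> = 1}"
        by (auto simp: Bs_eq)
      moreover have "{\<omega> \<in> space M. Bs 1 \<omega> = 1} \<in> sets M" using Bmeas[of 1] by measurable
      ultimately have "{\<omega> \<in> space M. real k / real n \<in> R n 1 \<omega>} \<in> sets M" by simp
      then show ?thesis by (simp add: q_def)
    qed
    finally show ?thesis .
  qed
  have indB: "P.indep_vars (\<lambda>_. borel) Bs A" if "A \<subseteq> {1..N}" for A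
    unfolding Bs_def using that by (intro P.indep_vars_compose2[OF P.indep_vars_subset[OF R_indep]]) auto
  have prodB: "(\<integral>\<omega>. (\<Prod>i\<in>A. Bs i \<omega>) \<partial>M) = (\<Prod>i\<in>A. q)" if A: "A \<subseteq> {1..N}" for A
  proof -
    have fA: "finite A" using A finite_subset by blast
    have "(\<integral>\<omega>. (\<Prod>i\<in>A. Bs i \<omega>) \<partial>M) = (\<Prod>i\<in>A. \<integral>\<omega>. Bs i \<omega> \<partial>M)"
      using A by (intro P.indep_vars_lebesgue_integral fA indB intB) auto
    also have "\<dots> = (\<Prod>i\<in>A. q)" using A EB by (intro prod.cong) auto
    finally show ?thesis .
  qed
  have cross: "(\<integral>\<omega>. (\<Prod>i\<in>A. Bs i \<omega>) * (\<Prod>i\<in>A. exp (lam * Y i \<omega>) - 1) \<partial>M)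
      = (\<integral>\<omega>. (\<Prod>i\<in>A. Bs i \<omega>) \<partial>M) * (\<integral>\<omega>. (\<Prod>i\<in>A. exp (lam * Y i \<omega>) - 1) \<partial>M)"
    if A: "A \<subseteq> {1..N}" for A
  proof -
    have fA: "finite A" using A finite_subset by blast
    define V1 where "V1 \<omega> = (\<Prod>i\<in>A. hU (X i \<omega>))" for \<omega>
    define V2 where "V2 \<omega> = (\<Prod>i\<in>A. Bs i \<omega>)" for \<omega>
    have A1: "\<And>i. i \<in> A \<Longrightarrow> i \<ge> 1" using A by auto
    have iv: "P.indep_var borel V1 borel V2"
    proof (rule P.indep_set_to_var[OF XR_indep])
      show "\<And>\<omega>. \<omega> \<in> space M \<Longrightarrow> (\<lambda>j\<in>{1..}. X j \<omega>) \<in> space (PiM {1..} (\<lambda>_. borel))"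
        by (simp add: space_PiM)
      show "\<And>\<omega>. \<omega> \<in> space M \<Longrightarrow> (\<lambda>nj\<in>UNIV \<times> {1..}. grid_trace (fst nj) (R (fst nj) (snd nj) \<omega>))
           \<in> space (PiM (UNIV \<times> {1..}) (\<lambda>nj. count_space (Pow {..fst nj})))"
        by (auto simp: space_PiM grid_trace_def)
      show "(\<lambda>f. \<Prod>i\<in>A. hU (f i)) \<in> borel_measurable (PiM {1..} (\<lambda>_. borel))"
      proof (intro borel_measurable_prod)
        fix i assume "i \<in> A"
        then have "i \<in> {1..}" using A1 by auto
        then have "(\<lambda>f. f i) \<in> measurable (PiM {1..} (\<lambda>_. borel)) (borel :: real measure)"
          by (rule measurable_component_singleton)
        then show "(\<lambda>f. hU (f i)) \<in> borel_measurable (PiM {1..} (\<lambda>_. borel))"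
          by (intro measurable_compose[OF _ hUm])
      qed
      show "(\<lambda>f. \<Prod>i\<in>A. hB (f (n, i))) \<in> borel_measurable (PiM (UNIV \<times> {1..}) (\<lambda>nj. count_space (Pow {..fst nj})))"
      proof (intro borel_measurable_prod)
        fix i assume "i \<in> A"
        then have "(n, i) \<in> UNIV \<times> {1..}" using A1 by auto
        then have "(\<lambda>f. f (n, i)) \<in> measurable (PiM (UNIV \<times> {1..}) (\<lambda>nj. count_space (Pow {..fst nj}))) (count_space (Pow {..fst (n, i)}))"
          by (rule measurable_component_singleton)
        then show "(\<lambda>f. hB (f (n, i))) \<in> borel_measurable (PiM (UNIV \<times> {1..}) (\<lambda>nj. count_space (Pow {..fst nj})))"
          by (intro measurable_compose[OF _ hBm]) simp
      qed
      show "V1 \<in> borel_measurable M" unfolding V1_def using A1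
        by (intro borel_measurable_prod measurable_compose[OF Xm hUm]) auto
      show "V2 \<in> borel_measurable M" unfolding V2_def using A1
        by (intro borel_measurable_prod Bmeas) auto
      show "\<And>\<omega>. \<omega> \<in> space M \<Longrightarrow> V1 \<omega> = (\<lambda>f. \<Prod>i\<in>A. hU (f i)) (\<lambda>j\<in>{1..}. X j \<omega>)"
        unfolding V1_def using A1 by (intro prod.cong) auto
      show "\<And>\<omega>. \<omega> \<in> space M \<Longrightarrow> V2 \<omega> = (\<lambda>f. \<Prod>i\<in>A. hB (f (n, i)))
           (\<lambda>nj\<in>UNIV \<times> {1..}. grid_trace (fst nj) (R (fst nj) (snd nj) \<omega>))"
        unfolding V2_def Bs_def using A1 by (intro prod.cong) auto
    qed
    have i1: "integrable M V1" unfolding V1_def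
      using A by (intro P.indep_vars_integrable fA indU intU) auto
    have i2: "integrable M V2" unfolding V2_def
      using A by (intro P.indep_vars_integrable fA indB intB) auto
    have "(\<integral>\<omega>. V1 \<omega> * V2 \<omega> \<partial>M) = (\<integral>\<omega>. V1 \<omega> \<partial>M) * (\<integral>\<omega>. V2 \<omega> \<partial>M)"
      by (rule P.indep_var_lebesgue_integral[OF iv i1 i2])
    then show ?thesis by (simp add: V1_def V2_def Y_def hU_def mult.commute)
  qed
  have B01: "Bs i \<omega> = 0 \<or> Bs i \<omega> = 1" for i \<omega> by (simp add: Bs_eq)
  have Ym: "Y i \<in> borel_measurable M" if "i \<in> {1..N}" for i
    unfolding Y_def using that by (intro measurable_compose[OF Xm hYm]) auto
  have q01: "0 \<le> q" "q \<le> 1" by (simp_all add: q_def)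
  have u1: "u \<ge> -1"
  proof -
    have "(\<integral>\<omega>. -1 \<partial>M) \<le> u" unfolding u_def
      using intU[of 1] by (intro integral_mono) (auto simp: hU_def)
    then show ?thesis by (simp add: P.prob_space)
  qed
  have "(\<integral>\<omega>. exp (lam * (\<Sum>i\<in>{1..N}. Y i \<omega> * Bs i \<omega>)) \<partial>M) \<le> exp (real (card {1..N}) * q * u)"
    by (rule P.chernoff_core[OF _ Ym Bmeas B01 _ prodX prodB cross q01 u1]) (use Ybd in auto)
  then show ?thesis by (simp add: Y_def hY_def Bs_eq q_def u_def hU_def)
qed




theorem lemma3p9:
  fixes M :: "'a measure"
    and E :: "real set"
    and R :: "nat \<Rightarrow> nat \<Rightarrow> 'a \<Rightarrow> real set"
    and X :: "nat \<Rightarrow> 'a \<Rightarrow> real"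
    and \<sigma> :: "nat \<Rightarrow> 'a \<Rightarrow> nat \<Rightarrow> nat"
    and m :: "nat \<Rightarrow> nat"
    and a :: "nat \<Rightarrow> real"
    and c0 \<alpha> p \<kappa> \<gamma> :: real
    and l :: nat and g1 g2 \<epsilon> :: real
  assumes M: "prob_space M"
    and E: "E \<subseteq> {0..1}" "finite ({0..1} - E)"
    \<comment> \<open>random sets R_{n,j}, j >= 1: a.s. contained in the grid, i.i.d. in j\<close>
    and R_grid: "\<And>n j. j \<ge> 1 \<Longrightarrow> AE \<omega> in M. R n j \<omega> \<subseteq> {real k / real n | k. k \<le> n}"
    and R_indep: "\<And>n. prob_space.indep_vars M (\<lambda>_. count_space (Pow {..n}))
                     (\<lambda>j \<omega>. grid_trace n (R n j \<omega>)) {1..}"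
    and R_ident: "\<And>n j. j \<ge> 1 \<Longrightarrow>
        distr M (count_space (Pow {..n})) (\<lambda>\<omega>. grid_trace n (R n j \<omega>))
      = distr M (count_space (Pow {..n})) (\<lambda>\<omega>. grid_trace n (R n 1 \<omega>))"
    and c0: "c0 > 0"
    and R_small: "\<And>g1 g2. {g1..g2} \<subseteq> E \<Longrightarrow> \<exists>C. \<forall>n\<ge>1. \<forall>k\<le>n. real k / real n \<in> {g1..g2} \<longrightarrow>
        measure M {\<omega> \<in> space M. real k / real n \<in> R n 1 \<omega>} \<le> C * real n powr (- c0)"
    \<comment> \<open>X_j, j >= 1, i.i.d. and independent of all R_{n,j}\<close>
    and X_indep: "prob_space.indep_vars M (\<lambda>_. borel) X {1..}"
    and X_ident: "\<And>j. j \<ge> 1 \<Longrightarrow> distr M borel (X j) = distr M borel (X 1)"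
    and XR_indep: "prob_space.indep_set M
        (sets (vimage_algebra (space M) (\<lambda>\<omega>. \<lambda>j\<in>{1..}. X j \<omega>) (PiM {1..} (\<lambda>_. borel))))
        (sets (vimage_algebra (space M)
           (\<lambda>\<omega>. \<lambda>nj\<in>UNIV \<times> {1..}. grid_trace (fst nj) (R (fst nj) (snd nj) \<omega>))
           (PiM (UNIV \<times> {1..}) (\<lambda>nj. count_space (Pow {..fst nj})))))"
    and \<alpha>: "\<alpha> \<ge> 1"
    and tail: "\<exists>L. slowly_varying L \<and>
        (\<forall>x>0. measure M {\<omega> \<in> space M. \<bar>X 1 \<omega>\<bar> > x} = x powr (- \<alpha>) * L x)"
    and p: "0 < p" "p \<le> 1"
    and balance: "((\<lambda>x. measure M {\<omega> \<in> space M. X 1 \<omega> > x}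
                      / measure M {\<omega> \<in> space M. \<bar>X 1 \<omega>\<bar> > x}) \<longlongrightarrow> p) at_top"
    and m_mono: "mono m" and m_pos: "\<And>n. m n > 0"
    and m_inf: "filterlim m at_top sequentially"
    and \<kappa>: "\<kappa> > 0" "\<alpha> > 1 \<Longrightarrow> \<kappa> < c0 / (1 - 1 / \<alpha>)"
    and m_growth: "\<exists>C. \<forall>n\<ge>1. real (m n) \<le> C * real n powr \<kappa>"
    and a_n: "(\<lambda>n. real (m n) * measure M {\<omega> \<in> space M. X 1 \<omega> > a n}) \<longlonglongrightarrow> 1"
    \<comment> \<open>sigma_n: the permutation ordering |X_1|,...,|X_{m_n}| decreasingly\<close>
    and \<sigma>_meas: "\<And>n. \<sigma> n \<in> measurable M (count_space UNIV)"
    and \<sigma>_perm: "\<And>n \<omega>. \<omega> \<in> space M \<Longrightarrow> bij_betw (\<sigma> n \<omega>) {1..m n} {1..m n}"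
    and \<sigma>_sorted: "\<And>n \<omega> i j. \<omega> \<in> space M \<Longrightarrow> 1 \<le> i \<Longrightarrow> i \<le> j \<Longrightarrow> j \<le> m n \<Longrightarrow>
        \<bar>X (\<sigma> n \<omega> j) \<omega>\<bar> \<le> \<bar>X (\<sigma> n \<omega> i) \<omega>\<bar>"
    and \<gamma>: "0 < \<gamma>" "\<gamma> < c0 / \<alpha>"
    and G: "{g1..g2} \<subseteq> E"
    and \<epsilon>: "\<epsilon> > 0"
  shows "limsup (\<lambda>n. ereal (measure M {\<omega> \<in> space M.
            Max (insert 0 ((\<lambda>k. \<bar>Wsum X R \<sigma> m a \<gamma> n l k \<omega>\<bar>) ` {k. k \<le> n \<and> real k / real n \<in> {g1..g2}}))
              / a n > \<epsilon>})) = 0"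
proof -
  interpret P: prob_space M by (rule M)
  have Xm[measurable]: "X i \<in> borel_measurable M" if "i \<ge> 1" for i
    using X_indep that unfolding P.indep_vars_def2 by auto
  have X1m[measurable]: "X 1 \<in> borel_measurable M" using Xm by simp
  have Gm: "(\<lambda>\<omega>. grid_trace n (R n i \<omega>)) \<in> measurable M (count_space (Pow {..n}))" if "i \<ge> 1" for n i
    using R_indep[of n] that unfolding P.indep_vars_def2 by auto
  define T where "T x = measure M {\<omega> \<in> space M. \<bar>X 1 \<omega>\<bar> > x}" for x
  define Pp where "Pp x = measure M {\<omega> \<in> space M. X 1 \<omega> > x}" for x
  have Tanti: "T y \<le> T x" if "x \<le> y" for x y
    unfolding T_def using that by (intro P.finite_measure_mono) auto
  have T01: "0 \<le> T x \<and> T x \<le> 1" for x unfolding T_def by simp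
  have Panti: "Pp y \<le> Pp x" if "x \<le> y" for x y
    unfolding Pp_def using that by (intro P.finite_measure_mono) auto
  obtain L where L: "slowly_varying L" and TL: "\<And>x. x > 0 \<Longrightarrow> T x = x powr (-\<alpha>) * L x"
    using tail unfolding T_def by auto
  have Lpos: "eventually (\<lambda>x. L x > 0) at_top" and L2: "((\<lambda>x. L (2 * x) / L x) \<longlongrightarrow> 1) at_top"
    using L unfolding slowly_varying_def by auto
  have Tpos: "eventually (\<lambda>x. T x > 0) at_top"
    using Lpos eventually_gt_at_top[of 0] by eventually_elim (simp add: TL)
  have ratio: "((\<lambda>x. T (2*x) / T x) \<longlongrightarrow> 2 powr (-\<alpha>)) at_top"
  proof -
    have "((\<lambda>x. 2 powr (-\<alpha>) * (L (2 * x) / L x)) \<longlongrightarrow> 2 powr (-\<alpha>) * 1) at_top"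
      by (intro tendsto_mult tendsto_const L2)
    moreover have "eventually (\<lambda>x. 2 powr (-\<alpha>) * (L (2 * x) / L x) = T (2*x) / T x) at_top"
      using eventually_gt_at_top[of 0]
    proof eventually_elim
      case (elim x)
      have "T (2*x) / T x = ((2*x) powr (-\<alpha>) * L (2*x)) / (x powr (-\<alpha>) * L x)"
        using elim by (simp add: TL)
      also have "\<dots> = ((2*x) powr (-\<alpha>) / x powr (-\<alpha>)) * (L (2*x) / L x)"
        by (rule times_divide_times_eq[symmetric])
      also have "(2*x) powr (-\<alpha>) / x powr (-\<alpha>) = 2 powr (-\<alpha>)"
        using elim by (simp add: powr_mult)
      finally show ?case by simp
    qed
    ultimately show ?thesis by (simp add: tendsto_cong)
  qed
  have Pbal: "((\<lambda>x. Pp x / T x) \<longlongrightarrow> p) at_top"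
    using balance unfolding Pp_def T_def .
  have an': "(\<lambda>n. real (m n) * Pp (a n)) \<longlonglongrightarrow> 1"
    using a_n unfolding Pp_def .
  obtain C0 where C0: "\<forall>n\<ge>1. \<forall>k\<le>n. real k / real n \<in> {g1..g2} \<longrightarrow>
        measure M {\<omega> \<in> space M. real k / real n \<in> R n 1 \<omega>} \<le> C0 * real n powr (- c0)"
    using R_small[OF G] by blast
  define C1 where "C1 = max C0 1"
  have C1: "C1 \<ge> 1" "C0 \<le> C1" by (auto simp: C1_def)
  have asy: "eventually (\<lambda>n. 1 \<le> a n \<and> real (m n) * real n powr (-c0) *
            (1 + (\<Sum>j<nat \<lceil>log 2 (a n)\<rceil>. 2^j * T (2^j))) / a n \<le> \<epsilon> / (8 * C1)) sequentially"
    using C1 \<epsilon> by (intro asym[OF Tanti T01 Tpos ratio \<alpha> Panti Pbal p(1) m_inf m_growth \<kappa> c0 an']) auto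
  have dl: "eventually (\<lambda>n. real l * real n powr (-\<gamma>) \<le> \<epsilon> / 2) sequentially"
  proof -
    have "(\<lambda>n. real l * real n powr (-\<gamma>)) \<longlonglongrightarrow> real l * 0"
      using \<gamma> by (intro tendsto_mult tendsto_const tendsto_neg_powr filterlim_real_sequentially) auto
    then have "eventually (\<lambda>n. real l * real n powr (-\<gamma>) < \<epsilon> / 2) sequentially"
      using \<epsilon> by (intro order_tendstoD(2)) auto
    then show ?thesis by (auto elim: eventually_mono)
  qed
  have bound: "eventually (\<lambda>n. measure M {\<omega> \<in> space M.
            Max (insert 0 ((\<lambda>k. \<bar>Wsum X R \<sigma> m a \<gamma> n l k \<omega>\<bar>) ` {k. k \<le> n \<and> real k / real n \<in> {g1..g2}}))
              / a n > \<epsilon>} \<le> 2 * (real n + 1) * exp (- (\<epsilon> * real n powr \<gamma> / 4))) sequentially"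
    using asy dl eventually_ge_at_top[of 1]
  proof eventually_elim
    case (elim n)
    define an where "an = a n"
    define \<delta> where "\<delta> = real n powr (-\<gamma>)"
    define lam0 where "lam0 = real n powr \<gamma> / an"
    define E1 where "E1 = 1 + (\<Sum>j<nat \<lceil>log 2 an\<rceil>. 2^j * T (2^j))"
    define Kn where "Kn = {k. k \<le> n \<and> real k / real n \<in> {g1..g2}}"
    define Yv where "Yv i \<omega> = X i \<omega> * (if \<bar>X i \<omega>\<bar> / an \<le> \<delta> then 1 else (0::real))" for i \<omega>
    define Sv where "Sv k \<omega> = (\<Sum>i\<in>{1..m n}. (X i \<omega> * (if \<bar>X i \<omega>\<bar> / an \<le> \<delta> then 1 else 0))
                 * (if real k / real n \<in> R n i \<omega> then 1 else 0))" for k \<omega>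
    define ev where "ev ks = {\<omega> \<in> space M. snd ks * Sv (fst ks) \<omega> \<ge> \<epsilon> * an / 2}" for ks :: "nat \<times> real"
    have an1: "an \<ge> 1" and n1: "n \<ge> 1" using elim by (auto simp: an_def)
    have Q: "real (m n) * real n powr (-c0) * E1 / an \<le> \<epsilon> / (8 * C1)"
      using elim by (simp add: an_def E1_def)
    have ld: "real l * \<delta> \<le> \<epsilon> / 2" using elim by (simp add: \<delta>_def)
    have \<delta>0: "\<delta> > 0" using n1 by (simp add: \<delta>_def)
    have \<delta>1: "\<delta> \<le> 1" using n1 \<gamma> powr_mono[of "-\<gamma>" 0 "real n"] by (simp add: \<delta>_def)
    have lam0: "lam0 > 0" "lam0 * (\<delta> * an) = 1"
      using n1 an1 by (auto simp: lam0_def \<delta>_def powr_minus field_simps)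
    have Yv1m: "Yv 1 \<in> borel_measurable M" unfolding Yv_def by measurable
    have EY: "(\<integral>\<omega>. \<bar>Yv 1 \<omega>\<bar> \<partial>M) \<le> E1"
    proof -
      define J where "J = nat \<lceil>log 2 an\<rceil>"
      have J: "an \<le> 2^J" unfolding J_def by (rule two_pow_ceil_log(2)[OF an1])
      have "(\<integral>\<omega>. \<bar>Yv 1 \<omega>\<bar> \<partial>M) \<le> (\<integral>\<omega>. min \<bar>X 1 \<omega>\<bar> (2^J) \<partial>M)"
      proof (rule integral_mono)
        show "integrable M (\<lambda>\<omega>. min \<bar>X 1 \<omega>\<bar> (2^J))"
          by (rule P.integrable_const_bound[where B="2^J"]) auto
        show "integrable M (\<lambda>\<omega>. \<bar>Yv 1 \<omega>\<bar>)"
        proof (rule P.integrable_const_bound[where B="\<delta> * an"])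
          show "AE \<omega> in M. norm \<bar>Yv 1 \<omega>\<bar> \<le> \<delta> * an"
            using an1 \<delta>0 by (intro AE_I2) (auto simp: Yv_def field_simps)
        qed (use Yv1m in simp)
        fix \<omega> assume "\<omega> \<in> space M"
        have "\<delta> * an \<le> an" using \<delta>1 an1 by (simp add: mult_left_le_one_le)
        moreover have "\<bar>Yv 1 \<omega>\<bar> \<le> \<delta> * an" using an1 \<delta>0 by (auto simp: Yv_def field_simps)
        moreover have "\<bar>Yv 1 \<omega>\<bar> \<le> \<bar>X 1 \<omega>\<bar>" by (auto simp: Yv_def)
        ultimately show "\<bar>Yv 1 \<omega>\<bar> \<le> min \<bar>X 1 \<omega>\<bar> (2^J)"
          using J by linarith
      qed
      also have "\<dots> \<le> 1 + (\<Sum>j<J. 2^j * measure M {\<omega>\<in>space M. \<bar>X 1 \<omega>\<bar> > 2^j})"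
        by (rule P.trunc_mean[OF X1m])
      also have "\<dots> = E1" by (simp add: E1_def J_def T_def)
      finally show ?thesis .
    qed
    have Svm: "Sv k \<in> borel_measurable M" if "k \<le> n" for k
    proof -
      have eq: "Sv k \<omega> = (\<Sum>i\<in>{1..m n}. Yv i \<omega> * (\<lambda>S. if k \<in> S then 1 else (0::real)) (grid_trace n (R n i \<omega>)))" for \<omega>
        unfolding Sv_def Yv_def using that by (intro sum.cong) (auto simp: grid_trace_def)
      have "(\<lambda>\<omega>. \<Sum>i\<in>{1..m n}. Yv i \<omega> * (\<lambda>S. if k \<in> S then 1 else (0::real)) (grid_trace n (R n i \<omega>))) \<in> borel_measurable M"
      proof (intro borel_measurable_sum borel_measurable_times)
        fix i assume i: "i \<in> {1..m n}"
        show "Yv i \<in> borel_measurable M" unfolding Yv_def using i by (intro borel_measurable_times) (auto intro: Xm)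
        show "(\<lambda>\<omega>. (\<lambda>S. if k \<in> S then 1 else (0::real)) (grid_trace n (R n i \<omega>))) \<in> borel_measurable M"
          using i by (intro measurable_compose[OF Gm]) auto
      qed
      then show ?thesis using eq by (simp add: fun_eq_iff[symmetric] eq[abs_def])
    qed
    have evb: "measure M (ev ks) \<le> exp (- (\<epsilon> * real n powr \<gamma> / 4))" if ks: "ks \<in> Kn \<times> {1, -1}" for ks
    proof -
      obtain k s where kss: "ks = (k, s)" by (cases ks)
      have k: "k \<le> n" "real k / real n \<in> {g1..g2}" and s: "s = 1 \<or> s = -1" using ks kss by (auto simp: Kn_def)
      have abss: "\<bar>s\<bar> = 1" using s by auto
      define lam where "lam = s * lam0"
      have lamb: "\<bar>lam\<bar> * (\<delta> * an) \<le> 1" using lam0 abss by (simp add: lam_def abs_mult)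
      define q where "q = measure M {\<omega> \<in> space M. real k / real n \<in> R n 1 \<omega>}"
      define u where "u = (\<integral>\<omega>. exp (lam * (X 1 \<omega> * (if \<bar>X 1 \<omega>\<bar> / an \<le> \<delta> then 1 else 0))) - 1 \<partial>M)"
      have ch: "(\<integral>\<omega>. exp (lam * Sv k \<omega>) \<partial>M) \<le> exp (real (m n) * q * u)"
        unfolding Sv_def q_def u_def
        by (rule chernoff_nk[OF M R_indep R_ident X_indep X_ident XR_indep k(1)]) (use an1 \<delta>0 lamb in auto)
      have Ybd: "\<bar>lam * Yv 1 \<omega>\<bar> \<le> 1" for \<omega>
      proof -
        have "\<bar>Yv 1 \<omega>\<bar> \<le> \<delta> * an" using an1 \<delta>0 by (auto simp: Yv_def field_simps)
        then have "\<bar>lam\<bar> * \<bar>Yv 1 \<omega>\<bar> \<le> \<bar>lam\<bar> * (\<delta> * an)" by (intro mult_left_mono) auto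
        then show ?thesis using lamb by (simp add: abs_mult)
      qed
      have ub: "u \<le> 2 * lam0 * E1"
      proof -
        have "u \<le> 2 * \<bar>lam\<bar> * (\<integral>\<omega>. \<bar>Yv 1 \<omega>\<bar> \<partial>M)"
          unfolding u_def using P.u_bound(1)[OF Yv1m, of lam] Ybd by (simp add: Yv_def)
        also have "\<dots> \<le> 2 * \<bar>lam\<bar> * E1" using EY by (intro mult_left_mono) auto
        also have "\<bar>lam\<bar> = lam0" using lam0 abss by (simp add: lam_def abs_mult)
        finally show ?thesis .
      qed
      have E10: "E1 \<ge> 0"
      proof -
        have "0 \<le> (\<integral>\<omega>. \<bar>Yv 1 \<omega>\<bar> \<partial>M)" by simp
        then show ?thesis using EY by linarith
      qed
      have q0: "0 \<le> q" by (simp add: q_def)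
      have qb: "q \<le> C1 * real n powr (-c0)"
      proof -
        have "q \<le> C0 * real n powr (-c0)" using C0 n1 k unfolding q_def by auto
        also have "\<dots> \<le> C1 * real n powr (-c0)" using C1 by (intro mult_right_mono) auto
        finally show ?thesis .
      qed
      have "real (m n) * q * u \<le> real (m n) * (q * (2 * lam0 * E1))"
        using ub q0 by (simp add: mult.assoc mult_left_mono)
      also have "\<dots> \<le> real (m n) * ((C1 * real n powr (-c0)) * (2 * lam0 * E1))"
        using qb lam0 E10 by (intro mult_left_mono mult_right_mono) auto
      also have "\<dots> = 2 * C1 * real n powr \<gamma> * (real (m n) * real n powr (-c0) * E1 / an)"
        by (simp add: lam0_def)
      also have "\<dots> \<le> 2 * C1 * real n powr \<gamma> * (\<epsilon> / (8 * C1))"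
        using Q C1 by (intro mult_left_mono) auto
      also have "\<dots> = \<epsilon> * real n powr \<gamma> / 4" using C1 by (simp add: field_simps)
      finally have mqu: "real (m n) * q * u \<le> \<epsilon> * real n powr \<gamma> / 4" .
      have Sm: "Sv k \<in> borel_measurable M" using Svm k by simp
      have intE: "integrable M (\<lambda>\<omega>. exp (lam * Sv k \<omega>))"
      proof (rule P.integrable_const_bound[where B="exp (real (m n))"])
        show "AE \<omega> in M. norm (exp (lam * Sv k \<omega>)) \<le> exp (real (m n))"
        proof (rule AE_I2)
          fix \<omega> assume "\<omega> \<in> space M"
          have "\<bar>lam * Sv k \<omega>\<bar> \<le> (\<Sum>i\<in>{1..m n}. \<bar>lam * (Yv i \<omega> * (if real k / real n \<in> R n i \<omega> then 1 else 0))\<bar>)"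
            unfolding Sv_def Yv_def sum_distrib_left by (rule sum_abs)
          also have "\<dots> \<le> (\<Sum>i\<in>{1..m n}. 1)"
          proof (intro sum_mono)
            fix i
            have "\<bar>Yv i \<omega>\<bar> \<le> \<delta> * an" using an1 \<delta>0 by (auto simp: Yv_def field_simps)
            then have "\<bar>lam\<bar> * \<bar>Yv i \<omega>\<bar> \<le> \<bar>lam\<bar> * (\<delta> * an)" by (intro mult_left_mono) auto
            then show "\<bar>lam * (Yv i \<omega> * (if real k / real n \<in> R n i \<omega> then 1 else 0))\<bar> \<le> 1"
              using lamb by (auto simp: abs_mult)
          qed
          finally have "lam * Sv k \<omega> \<le> real (m n)" by simp
          then show "norm (exp (lam * Sv k \<omega>)) \<le> exp (real (m n))" by simp
        qed
      qed (use Sm in measurable)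
      have "ev ks \<subseteq> {\<omega> \<in> space M. exp (lam * Sv k \<omega>) \<ge> exp (\<epsilon> * real n powr \<gamma> / 2)}"
      proof
        fix \<omega> assume "\<omega> \<in> ev ks"
        then have w: "\<omega> \<in> space M" "s * Sv k \<omega> \<ge> \<epsilon> * an / 2" by (auto simp: ev_def kss)
        have "lam * Sv k \<omega> = lam0 * (s * Sv k \<omega>)" by (simp add: lam_def)
        also have "\<dots> \<ge> lam0 * (\<epsilon> * an / 2)" using w lam0 by (intro mult_left_mono) auto
        also have "lam0 * (\<epsilon> * an / 2) = \<epsilon> * real n powr \<gamma> / 2" using an1 by (simp add: lam0_def)
        finally show "\<omega> \<in> {\<omega> \<in> space M. exp (lam * Sv k \<omega>) \<ge> exp (\<epsilon> * real n powr \<gamma> / 2)}"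
          using w by simp
      qed
      then have "measure M (ev ks) \<le> measure M {\<omega> \<in> space M. exp (lam * Sv k \<omega>) \<ge> exp (\<epsilon> * real n powr \<gamma> / 2)}"
        using Sm by (intro P.finite_measure_mono) measurable
      also have "\<dots> \<le> (\<integral>\<omega>. exp (lam * Sv k \<omega>) \<partial>M) / exp (\<epsilon> * real n powr \<gamma> / 2)"
        using Sm intE by (intro integral_Markov_inequality_measure) (auto intro: AE_I2)
      also have "\<dots> \<le> exp (real (m n) * q * u) / exp (\<epsilon> * real n powr \<gamma> / 2)"
        using ch by (intro divide_right_mono) auto
      also have "\<dots> \<le> exp (\<epsilon> * real n powr \<gamma> / 4) / exp (\<epsilon> * real n powr \<gamma> / 2)"
        using mqu by (intro divide_right_mono) auto
      also have "\<dots> = exp (- (\<epsilon> * real n powr \<gamma> / 4))"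
        by (simp add: exp_diff[symmetric])
      finally show ?thesis .
    qed
    define Tgt where "Tgt = {\<omega> \<in> space M.
            Max (insert 0 ((\<lambda>k. \<bar>Wsum X R \<sigma> m a \<gamma> n l k \<omega>\<bar>) ` {k. k \<le> n \<and> real k / real n \<in> {g1..g2}}))
              / a n > \<epsilon>}"
    have finK: "finite Kn" by (auto simp: Kn_def)
    have finKS: "finite (Kn \<times> {1, -1::real})" using finK by simp
    have evm: "ev ks \<in> sets M" if "ks \<in> Kn \<times> {1, -1}" for ks
    proof -
      have "Sv (fst ks) \<in> borel_measurable M" using that Svm by (auto simp: Kn_def)
      then show ?thesis unfolding ev_def by measurable
    qed
    have sub: "Tgt \<subseteq> (\<Union>ks\<in>Kn \<times> {1, -1}. ev ks)"
    proof
      fix \<omega> assume w: "\<omega> \<in> Tgt"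
      then have wM: "\<omega> \<in> space M" by (simp add: Tgt_def)
      define f where "f k = \<bar>Wsum X R \<sigma> m a \<gamma> n l k \<omega>\<bar>" for k
      define Mx where "Mx = Max (insert 0 (f ` Kn))"
      have "Mx / an > \<epsilon>" using w by (simp add: Tgt_def Mx_def f_def Kn_def an_def)
      then have Mxg: "Mx > \<epsilon> * an" using an1 by (simp add: field_simps)
      have "Mx \<in> insert 0 (f ` Kn)" unfolding Mx_def using finK by (intro Max_in) auto
      moreover have "Mx \<noteq> 0" using Mxg \<epsilon> an1 by (smt (verit) mult_pos_pos)
      ultimately obtain k where k: "k \<in> Kn" "f k > \<epsilon> * an" using Mxg by auto
      have "f k \<le> \<bar>Sv k \<omega>\<bar> + real l * (\<delta> * an)"
      proof -
        have "f k = \<bar>\<Sum>j \<in> {j \<in> {1..m n}. real k / real n \<in> R n (\<sigma> n \<omega> j) \<omega>} - {1..l}.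
                 (\<lambda>i. X i \<omega> * (if \<bar>X i \<omega>\<bar> / an \<le> \<delta> then 1 else 0)) (\<sigma> n \<omega> j)\<bar>"
          by (simp add: f_def Wsum_def hatJ_def an_def \<delta>_def)
        also have "\<dots> \<le> \<bar>\<Sum>i\<in>{1..m n}. (\<lambda>i. X i \<omega> * (if \<bar>X i \<omega>\<bar> / an \<le> \<delta> then 1 else 0)) i
                 * (if real k / real n \<in> R n i \<omega> then 1 else 0)\<bar> + real l * (\<delta> * an)"
        proof (rule det_bound[OF \<sigma>_perm[OF wM]])
          fix i show "\<bar>(\<lambda>i. X i \<omega> * (if \<bar>X i \<omega>\<bar> / an \<le> \<delta> then 1 else (0::real))) i\<bar> \<le> \<delta> * an"
            using an1 \<delta>0 by (auto simp: field_simps)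
        qed
        also have "\<dots> = \<bar>Sv k \<omega>\<bar> + real l * (\<delta> * an)" by (simp add: Sv_def)
        finally show ?thesis .
      qed
      moreover have "real l * (\<delta> * an) \<le> \<epsilon> / 2 * an" using ld an1
        by (metis mult.assoc mult_right_mono less_le_trans zero_less_one less_imp_le)
      ultimately have "\<bar>Sv k \<omega>\<bar> \<ge> \<epsilon> * an / 2" using k by linarith
      then have "(if Sv k \<omega> \<ge> 0 then 1 else -1) * Sv k \<omega> \<ge> \<epsilon> * an / 2" by (auto split: if_splits)
      then have "\<omega> \<in> ev (k, if Sv k \<omega> \<ge> 0 then 1 else -1)" using wM by (simp add: ev_def)
      moreover have "(k, if Sv k \<omega> \<ge> 0 then 1 else -1::real) \<in> Kn \<times> {1, -1}" using k by auto
      ultimately show "\<omega> \<in> (\<Union>ks\<in>Kn \<times> {1, -1}. ev ks)" by blast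
    qed
    have "measure M Tgt \<le> 2 * (real n + 1) * exp (- (\<epsilon> * real n powr \<gamma> / 4))"
    proof (cases "Tgt \<in> sets M")
      case True
      have "measure M Tgt \<le> measure M (\<Union>ks\<in>Kn \<times> {1, -1}. ev ks)"
        using sub evm finKS by (intro P.finite_measure_mono) auto
      also have "\<dots> \<le> (\<Sum>ks\<in>Kn \<times> {1, -1}. measure M (ev ks))"
        using evm finKS by (intro P.finite_measure_subadditive_finite) auto
      also have "\<dots> \<le> (\<Sum>ks\<in>Kn \<times> {1, -1::real}. exp (- (\<epsilon> * real n powr \<gamma> / 4)))"
        by (rule sum_mono) (rule evb)
      also have "\<dots> = real (card (Kn \<times> {1, -1::real})) * exp (- (\<epsilon> * real n powr \<gamma> / 4))" by simp
      also have "\<dots> \<le> 2 * (real n + 1) * exp (- (\<epsilon> * real n powr \<gamma> / 4))"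
      proof (intro mult_right_mono)
        have "card Kn \<le> card {..n}" by (intro card_mono) (auto simp: Kn_def)
        then have "card Kn \<le> n + 1" by simp
        then have "card (Kn \<times> {1, -1::real}) \<le> 2 * (n + 1)" by (simp add: card_cartesian_product)
        then have "real (card (Kn \<times> {1, -1::real})) \<le> real (2 * (n + 1))" by (simp only: of_nat_le_iff)
        then show "real (card (Kn \<times> {1, -1::real})) \<le> 2 * (real n + 1)" by simp
      qed simp
      finally show ?thesis .
    next
      case False
      then show ?thesis by (simp add: measure_notin_sets)
    qed
    then show ?case by (simp add: Tgt_def)
  qed
  have lim: "(\<lambda>n. measure M {\<omega> \<in> space M.
            Max (insert 0 ((\<lambda>k. \<bar>Wsum X R \<sigma> m a \<gamma> n l k \<omega>\<bar>) ` {k. k \<le> n \<and> real k / real n \<in> {g1..g2}}))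
              / a n > \<epsilon>}) \<longlonglongrightarrow> 0"
    by (rule tendsto_sandwich[OF _ bound tendsto_const exp_decay_lim[OF \<epsilon> \<gamma>(1)]]) simp
  have "(\<lambda>n. ereal (measure M {\<omega> \<in> space M.
            Max (insert 0 ((\<lambda>k. \<bar>Wsum X R \<sigma> m a \<gamma> n l k \<omega>\<bar>) ` {k. k \<le> n \<and> real k / real n \<in> {g1..g2}}))
              / a n > \<epsilon>})) \<longlonglongrightarrow> ereal 0"
    using lim by (rule tendsto_ereal)
  from lim_imp_Limsup[OF trivial_limit_sequentially this] show ?thesis by simp
qed


end
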